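(* Let $\Omega$ be a metric space, $T_1,\dots,T_\gamma$ commuting homeomorphisms of $\Omega$, $T^n=T_1^{n_1}\cdots T_\gamma^{n_\gamma}$ for $n\in\mathbb{Z}^\gamma$, and $\mu$ a Borel measure on $\Omega$ ergodic for this $\mathbb{Z}^\gamma$-action. Let $f:\Omega\to\mathbb{R}$ be bounded and have an invariant continuity filter at every $\omega\in\Omega$, and define $H_\omega$ on $\ell^2(\mathbb{Z}^\gamma)$ by $(H_\omega u)(n)=\sum_{|m-n|=1}u(m)+f(T^n\omega)u(n)$. If $H_\omega$ has uniformly localized eigenfunctions (ULE) for all $\omega$ in a set of positive $\mu$-measure, then $H_\omega$ has homogeneous ULE in $\operatorname{supp}(\mu)$: there exist $\alpha>0$, $C>0$ independent of $\omega$ such that for every $\omega\in\operatorname{supp}(\mu)$, $H_\omega$ has a complete orthonormal set of eigenfunctions $\{\phi^\omega_n\}$ and points $m^\omega_n\in\mathbb{Z}^\gamma$ with $|\phi^\omega_n(m)|\le Ce^{-\alpha|m-m^\omega_n|}$ for all $n,m$.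
   Context: $B(\omega,\delta)$ is the open ball of radius $\delta$ about $\omega$. $f$ has an invariant continuity filter if at every $\omega\in\Omega$ there is a filter $F_\omega$ of subsets of $\Omega$ such that every $A_\omega\in F_\omega$ satisfies: (1) $\mu(A_\omega\cap B(\omega,\delta))>0$ for every $\delta>0$; (2) $f(\omega_k)\to f(\omega)$ for every sequence $\omega_k\in A_\omega$ with $\omega_k\to\omega$; (3) $T^n(A_\omega)\in F_{T^n\omega}$ for every $n\in\mathbb{Z}^\gamma$. A self-adjoint operator $H$ on $\ell^2(\mathbb{Z}^\gamma)$ has ULE if it has a complete orthonormal set of eigenfunctions $\{\phi_n\}$ and there exist $\alpha>0$, $C>0$ and points $m_n\in\mathbb{Z}^\gamma$ with $|\phi_n(m)|\le Ce^{-\alpha|m-m_n|}$ for all $n,m$. *)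

theory Defs
  imports "HOL-Analysis.Analysis"
begin

text \<open>The lattice Z^gamma is represented as functions from a finite type 'g into int.\<close>

definition lat_norm :: "('g::finite \<Rightarrow> int) \<Rightarrow> real" where
  "lat_norm n = sqrt (\<Sum>i\<in>UNIV. (real_of_int (n i))^2)"

text \<open>Integer powers of a map (for bijections; negative powers use the inverse).\<close>
definition zpow :: "('a \<Rightarrow> 'a) \<Rightarrow> int \<Rightarrow> 'a \<Rightarrow> 'a" where
  "zpow g k = (if 0 \<le> k then g ^^ nat k else (inv g) ^^ nat (- k))"

text \<open>T^n = T_1^{n_1} ... T_gamma^{n_gamma} (order irrelevant when the T_i commute).\<close>
definition tpow :: "('g::finite \<Rightarrow> 'a \<Rightarrow> 'a) \<Rightarrow> ('g \<Rightarrow> int) \<Rightarrow> 'a \<Rightarrow> 'a" where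
  "tpow T n = foldr (\<lambda>i g. zpow (T i) (n i) \<circ> g) (SOME xs. distinct xs \<and> set xs = UNIV) id"

definition is_l2 :: "(('g::finite \<Rightarrow> int) \<Rightarrow> complex) \<Rightarrow> bool" where
  "is_l2 u \<longleftrightarrow> (\<lambda>n. (cmod (u n))^2) summable_on UNIV"

definition l2_inner :: "(('g::finite \<Rightarrow> int) \<Rightarrow> complex) \<Rightarrow> (('g \<Rightarrow> int) \<Rightarrow> complex) \<Rightarrow> complex" where
  "l2_inner u v = infsum (\<lambda>n. cnj (u n) * v n) UNIV"

definition schr_op :: "('g::finite \<Rightarrow> 'a \<Rightarrow> 'a) \<Rightarrow> ('a \<Rightarrow> real) \<Rightarrow> 'a
    \<Rightarrow> (('g \<Rightarrow> int) \<Rightarrow> complex) \<Rightarrow> ('g \<Rightarrow> int) \<Rightarrow> complex" where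
  "schr_op T f \<omega> u n = (\<Sum>m\<in>{m. lat_norm (m - n) = 1}. u m) + complex_of_real (f (tpow T n \<omega>)) * u n"

text \<open>ULE with explicit constants alpha, C: a complete orthonormal set of eigenfunctions
  (indexed by nat; l^2(Z^gamma) is separable and infinite-dimensional) with centres c.\<close>
definition ULE_const :: "real \<Rightarrow> real \<Rightarrow> ((('g::finite \<Rightarrow> int) \<Rightarrow> complex) \<Rightarrow> (('g \<Rightarrow> int) \<Rightarrow> complex)) \<Rightarrow> bool" where
  "ULE_const \<alpha> C H \<longleftrightarrow>
    (\<exists>(\<phi>::nat \<Rightarrow> ('g \<Rightarrow> int) \<Rightarrow> complex) (E::nat \<Rightarrow> complex) (c::nat \<Rightarrow> 'g \<Rightarrow> int).
       (\<forall>k. is_l2 (\<phi> k)) \<and>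
       (\<forall>k j. l2_inner (\<phi> k) (\<phi> j) = (if k = j then 1 else 0)) \<and>
       (\<forall>u. is_l2 u \<and> (\<forall>k. l2_inner (\<phi> k) u = 0) \<longrightarrow> u = (\<lambda>_. 0)) \<and>
       (\<forall>k. H (\<phi> k) = (\<lambda>n. E k * \<phi> k n)) \<and>
       (\<forall>k m. cmod (\<phi> k m) \<le> C * exp (- \<alpha> * lat_norm (m - c k))))"

definition has_ULE :: "((('g::finite \<Rightarrow> int) \<Rightarrow> complex) \<Rightarrow> (('g \<Rightarrow> int) \<Rightarrow> complex)) \<Rightarrow> bool" where
  "has_ULE H \<longleftrightarrow> (\<exists>\<alpha>>0. \<exists>C>0. ULE_const \<alpha> C H)"

definition ergodic_action :: "'a measure \<Rightarrow> ('g \<Rightarrow> 'a \<Rightarrow> 'a) \<Rightarrow> bool" where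
  "ergodic_action \<mu> T \<longleftrightarrow>
     (\<forall>i. T i \<in> measurable \<mu> \<mu> \<and> (\<forall>A\<in>sets \<mu>. emeasure \<mu> (T i -` A \<inter> space \<mu>) = emeasure \<mu> A)) \<and>
     (\<forall>A\<in>sets \<mu>. (\<forall>i. T i -` A \<inter> space \<mu> = A) \<longrightarrow> emeasure \<mu> A = 0 \<or> emeasure \<mu> (space \<mu> - A) = 0)"

definition msupp :: "('a::metric_space) measure \<Rightarrow> 'a set" where
  "msupp \<mu> = {\<omega>. \<forall>\<delta>>0. emeasure \<mu> (ball \<omega> \<delta>) > 0}"

definition inv_cont_filter :: "('a::metric_space) measure \<Rightarrow> ('g::finite \<Rightarrow> 'a \<Rightarrow> 'a) \<Rightarrow> ('a \<Rightarrow> real) \<Rightarrow> bool" where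
  "inv_cont_filter \<mu> T f \<longleftrightarrow>
     (\<exists>F :: 'a \<Rightarrow> 'a filter. \<forall>\<omega> A. eventually (\<lambda>x. x \<in> A) (F \<omega>) \<longrightarrow>
        (\<forall>\<delta>>0. outer_measure_of \<mu> (A \<inter> ball \<omega> \<delta>) > 0) \<and>
        (\<forall>s. (\<forall>k. s k \<in> A) \<and> s \<longlonglongrightarrow> \<omega> \<longrightarrow> (\<lambda>k. f (s k)) \<longlonglongrightarrow> f \<omega>) \<and>
        (\<forall>n. eventually (\<lambda>x. x \<in> tpow T n ` A) (F (tpow T n \<omega>))))"

end

theory Submission
  imports Defs "HOL-Library.Function_Algebras" "HOL-Library.Diagonal_Subsequence"
begin

definition vec_of :: "('g::finite \<Rightarrow> int) \<Rightarrow> real^'g" where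
  "vec_of n = (\<chi> i. real_of_int (n i))"

lemma lat_norm_vec: "lat_norm n = norm (vec_of n)"
  unfolding lat_norm_def vec_of_def norm_vec_def L2_set_def by simp

lemma vec_of_diff: "vec_of (a - b) = vec_of a - vec_of b"
  unfolding vec_of_def by (simp add: vec_eq_iff)
lemma vec_of_add: "vec_of (a + b) = vec_of a + vec_of b"
  unfolding vec_of_def by (simp add: vec_eq_iff)

lemma lat_norm_nonneg: "lat_norm n \<ge> 0"
  by (simp add: lat_norm_vec)

lemma lat_norm_zero[simp]: "lat_norm 0 = 0"
  by (simp add: lat_norm_vec vec_of_def vec_eq_iff)

lemma lat_norm_commute: "lat_norm (a - b) = lat_norm (b - a)"
  by (simp add: lat_norm_vec vec_of_diff norm_minus_commute)

lemma lat_norm_tri: "lat_norm (a - b) \<le> lat_norm (a - c) + lat_norm (b - c)"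
proof -
  have "vec_of (a - b) = vec_of (a - c) - vec_of (b - c)" by (simp add: vec_of_diff)
  then show ?thesis by (simp add: lat_norm_vec norm_triangle_ineq4)
qed

lemma lat_norm_comp: "\<bar>real_of_int (n i)\<bar> \<le> lat_norm n"
proof -
  have "\<bar>real_of_int (n i)\<bar> = \<bar>vec_of n $ i\<bar>" by (simp add: vec_of_def)
  also have "\<dots> \<le> norm (vec_of n)" by (rule component_le_norm_cart)
  finally show ?thesis by (simp add: lat_norm_vec)
qed

lemma lat_norm_sum_comp: "(\<Sum>i\<in>UNIV. \<bar>real_of_int (n i)\<bar>) \<le> real CARD('g) * lat_norm (n::'g::finite \<Rightarrow> int)"
proof -
  have "(\<Sum>i\<in>UNIV. \<bar>real_of_int (n i)\<bar>) \<le> (\<Sum>i\<in>(UNIV::'g set). lat_norm n)"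
    by (intro sum_mono lat_norm_comp)
  then show ?thesis by simp
qed

lemma finite_lat_ball: "finite {n::'g::finite \<Rightarrow> int. lat_norm (n - p) \<le> R}"
proof -
  have "{n::'g \<Rightarrow> int. lat_norm (n - p) \<le> R} \<subseteq> PiE UNIV (\<lambda>i. {p i - \<lceil>R\<rceil> .. p i + \<lceil>R\<rceil>})"
  proof
    fix n assume "n \<in> {n::'g \<Rightarrow> int. lat_norm (n - p) \<le> R}"
    then have h: "lat_norm (n - p) \<le> R" by simp
    have "\<bar>n i - p i\<bar> \<le> \<lceil>R\<rceil>" for i
    proof -
      have "\<bar>real_of_int ((n - p) i)\<bar> \<le> R" using lat_norm_comp[of "n - p" i] h by linarith
      then have "real_of_int \<bar>n i - p i\<bar> \<le> R" by simp
      then show ?thesis by linarith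
    qed
    then show "n \<in> PiE UNIV (\<lambda>i. {p i - \<lceil>R\<rceil> .. p i + \<lceil>R\<rceil>})"
      by (auto simp: PiE_def extensional_def abs_le_iff) (smt (verit))+
  qed
  moreover have "finite (PiE (UNIV::'g set) (\<lambda>i. {p i - \<lceil>R\<rceil> .. p i + \<lceil>R\<rceil>}))"
    by (intro finite_PiE) auto
  ultimately show ?thesis by (rule finite_subset)
qed

lemma int_exp_summable:
  assumes b: "b > 0"
  shows "(\<lambda>z::int. exp (- b * \<bar>real_of_int z\<bar>)) summable_on UNIV"
proof -
  have geo: "(\<lambda>n::nat. exp (- b * real n)) summable_on UNIV"
  proof -
    have "summable (\<lambda>n::nat. exp (- b) ^ n)" using b by (intro summable_geometric) simp
    moreover have "exp (- b * real n) = exp (- b) ^ n" for n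
      by (simp add: exp_of_nat_mult[symmetric] mult.commute)
    ultimately have "summable (\<lambda>n::nat. exp (- b * real n))" by simp
    then show ?thesis by (subst summable_on_UNIV_nonneg_real_iff) auto
  qed
  have 1: "(\<lambda>z::int. exp (- b * \<bar>real_of_int z\<bar>)) summable_on range int"
    by (subst summable_on_reindex) (use geo in \<open>auto simp: o_def\<close>)
  have 2: "(\<lambda>z::int. exp (- b * \<bar>real_of_int z\<bar>)) summable_on range (\<lambda>n. - int n)"
    by (subst summable_on_reindex) (use geo in \<open>auto simp: o_def inj_on_def\<close>)
  have "UNIV = range int \<union> range (\<lambda>n. - int n)"
  proof (rule set_eqI)
    fix z :: int
    show "z \<in> UNIV \<longleftrightarrow> z \<in> range int \<union> range (\<lambda>n. - int n)"
    proof (cases "z \<ge> 0")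
      case True then have "z = int (nat z)" by simp
      then show ?thesis by blast
    next
      case False then have "z = - int (nat (- z))" by simp
      then show ?thesis by blast
    qed
  qed
  then show ?thesis using summable_on_union[OF 1 2] by simp
qed

lemma prod_exp_summable:
  fixes q :: "int \<Rightarrow> real"
  assumes q0: "\<And>z. q z \<ge> 0" and qs: "q summable_on UNIV"
  shows "(\<lambda>d::'g::finite \<Rightarrow> int. \<Prod>i\<in>UNIV. q (d i)) summable_on UNIV"
proof (rule nonneg_bdd_above_summable_on)
  show "0 \<le> (\<Prod>i\<in>UNIV. q (d i))" for d by (intro prod_nonneg) (auto intro: q0)
  show "bdd_above (sum (\<lambda>d::'g \<Rightarrow> int. \<Prod>i\<in>UNIV. q (d i)) ` {F. F \<subseteq> UNIV \<and> finite F})"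
  proof (rule bdd_aboveI2)
    fix F :: "('g \<Rightarrow> int) set" assume "F \<in> {F. F \<subseteq> UNIV \<and> finite F}"
    then have fF: "finite F" by simp
    define G where "G = (\<Union>d\<in>F. range d)"
    have fG: "finite G" unfolding G_def using fF by auto
    have fP: "finite (PiE (UNIV::'g set) (\<lambda>i. G))" by (intro finite_PiE) (auto simp: fG)
    have sub: "F \<subseteq> PiE UNIV (\<lambda>i. G)" unfolding G_def by auto
    have "(\<Sum>d\<in>F. \<Prod>i\<in>UNIV. q (d i)) \<le> (\<Sum>d\<in>PiE (UNIV::'g set) (\<lambda>i. G). \<Prod>i\<in>UNIV. q (d i))"
      apply (rule sum_mono2)
      apply (rule fP)
      apply (rule sub)
      by (auto intro!: prod_nonneg q0)
    also have "\<dots> = (\<Prod>i\<in>(UNIV::'g set). \<Sum>z\<in>G. q z)"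
      by (subst prod_sum_PiE) (auto simp: fG)
    also have "\<dots> \<le> (\<Prod>i\<in>(UNIV::'g set). infsum q UNIV)"
      by (intro prod_mono conjI sum_nonneg q0 finite_sum_le_infsum qs fG) auto
    finally show "(\<Sum>d\<in>F. \<Prod>i\<in>UNIV. q (d i)) \<le> (\<Prod>i\<in>(UNIV::'g set). infsum q UNIV)" .
  qed
qed

lemma exp_lat_summable:
  assumes a: "a > 0"
  shows "(\<lambda>d::'g::finite \<Rightarrow> int. exp (- a * lat_norm d)) summable_on UNIV"
proof -
  define b where "b = a / real CARD('g)"
  have b: "b > 0" using a by (simp add: b_def)
  have ps: "(\<lambda>d::'g \<Rightarrow> int. \<Prod>i\<in>UNIV. exp (- b * \<bar>real_of_int (d i)\<bar>)) summable_on UNIV"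
    by (rule prod_exp_summable) (use int_exp_summable[OF b] in auto)
  show ?thesis
  proof (rule summable_on_comparison_test[OF ps])
    fix d :: "'g \<Rightarrow> int"
    have "(\<Prod>i\<in>UNIV. exp (- b * \<bar>real_of_int (d i)\<bar>)) = exp (\<Sum>i\<in>UNIV. - b * \<bar>real_of_int (d i)\<bar>)"
      by (simp add: exp_sum)
    also have "(\<Sum>i\<in>UNIV. - b * \<bar>real_of_int (d i)\<bar>) = - b * (\<Sum>i\<in>UNIV. \<bar>real_of_int (d i)\<bar>)"
      by (simp add: sum_distrib_left)
    finally have eq: "(\<Prod>i\<in>UNIV. exp (- b * \<bar>real_of_int (d i)\<bar>)) = exp (- b * (\<Sum>i\<in>UNIV. \<bar>real_of_int (d i)\<bar>))" .
    have "b * (\<Sum>i\<in>UNIV. \<bar>real_of_int (d i)\<bar>) \<le> b * (real CARD('g) * lat_norm d)"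
      using lat_norm_sum_comp[of d] b by (intro mult_left_mono) auto
    also have "\<dots> = a * lat_norm d" by (simp add: b_def)
    finally show "exp (- a * lat_norm d) \<le> (\<Prod>i\<in>UNIV. exp (- b * \<bar>real_of_int (d i)\<bar>))"
      unfolding eq by simp
  qed simp
qed

lemma shift_bij: "bij_betw (\<lambda>n. n - m) (UNIV :: ('g \<Rightarrow> int) set) UNIV"
  by (rule bij_betwI[where g="\<lambda>n. n + m"]) (auto simp: algebra_simps)
lemma shift_bij': "bij_betw (\<lambda>n. n + m) (UNIV :: ('g \<Rightarrow> int) set) UNIV"
  by (rule bij_betwI[where g="\<lambda>n. n - m"]) (auto simp: algebra_simps)

lemma shift_summable_iff:
  "(\<lambda>n. g (n - m)) summable_on (UNIV :: ('g \<Rightarrow> int) set) \<longleftrightarrow> g summable_on UNIV"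
  by (rule summable_on_reindex_bij_betw[OF shift_bij])

lemma shift_infsum:
  "infsum (\<lambda>n. g (n - m)) (UNIV :: ('g \<Rightarrow> int) set) = infsum g UNIV"
  by (rule infsum_reindex_bij_betw[OF shift_bij])

lemma shift_summable_iff':
  "(\<lambda>n. g (n + m)) summable_on (UNIV :: ('g \<Rightarrow> int) set) \<longleftrightarrow> g summable_on UNIV"
  by (rule summable_on_reindex_bij_betw[OF shift_bij'])

lemma shift_infsum':
  "infsum (\<lambda>n. g (n + m)) (UNIV :: ('g \<Rightarrow> int) set) = infsum g UNIV"
  by (rule infsum_reindex_bij_betw[OF shift_bij'])

lemma exp_lat_summable_shift:
  assumes a: "a > 0"
  shows "(\<lambda>n::'g::finite \<Rightarrow> int. exp (- a * lat_norm (n - c))) summable_on UNIV"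
  using exp_lat_summable[OF a] shift_summable_iff[of "\<lambda>d. exp (- a * lat_norm d)" c] by simp

lemma exp_lat_infsum_shift:
  "infsum (\<lambda>n::'g::finite \<Rightarrow> int. exp (- a * lat_norm (n - c))) UNIV = infsum (\<lambda>d::'g \<Rightarrow> int. exp (- a * lat_norm d)) UNIV"
  using shift_infsum[of "\<lambda>d. exp (- a * lat_norm d)" c] by simp

lemma tail_small:
  fixes h :: "'a \<Rightarrow> real"
  assumes hs: "h summable_on A" and h0: "\<And>x. x \<in> A \<Longrightarrow> h x \<ge> 0" and e: "e > 0"
  shows "\<exists>F. finite F \<and> F \<subseteq> A \<and> infsum h (A - F) \<le> e"
proof -
  obtain F where F: "finite F" "F \<subseteq> A" "dist (sum h F) (infsum h A) \<le> e"
    using infsum_finite_approximation[OF hs e] by blast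
  have "infsum h A = infsum h (F \<union> (A - F))" using F by (simp add: Un_absorb1)
  also have "\<dots> = infsum h F + infsum h (A - F)"
    by (rule infsum_Un_disjoint) (use F hs in \<open>auto intro: summable_on_subset_banach\<close>)
  finally have "infsum h (A - F) = infsum h A - sum h F" using F by simp
  with F show ?thesis by (auto simp: dist_real_def)
qed

lemma summable_on_diff':
  fixes f g :: "'a \<Rightarrow> 'b::{topological_ab_group_add}"
  assumes "f summable_on A" "g summable_on A"
  shows "(\<lambda>x. f x - g x) summable_on A"
proof -
  have "(\<lambda>x. f x + - g x) summable_on A"
    by (rule summable_on_add) (use assms in \<open>auto simp: summable_on_uminus\<close>)
  then show ?thesis by simp
qed

lemma infsum_diff':
  fixes f g :: "'a \<Rightarrow> 'b::{topological_ab_group_add, t2_space}"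
  assumes "f summable_on A" "g summable_on A"
  shows "infsum (\<lambda>x. f x - g x) A = infsum f A - infsum g A"
proof -
  have "infsum (\<lambda>x. f x + - g x) A = infsum f A + infsum (\<lambda>x. - g x) A"
    by (rule infsum_add) (use assms in \<open>auto simp: summable_on_uminus\<close>)
  then show ?thesis by (simp add: infsum_uminus)
qed

lemma infsum_single':
  "infsum (\<lambda>n. if n = m then x else (0::'b::{topological_comm_monoid_add,t2_space})) UNIV = x"
proof -
  have "((\<lambda>n. if n = m then x else 0) has_sum x) UNIV"
    by (rule has_sum_finite_neutralI[where B="{m}"]) auto
  then show ?thesis by (rule infsumI)
qed

lemma norm_infsum_le_dom:
  fixes f :: "'a \<Rightarrow> 'b::banach"
  assumes hs: "h summable_on A" and b: "\<And>x. x \<in> A \<Longrightarrow> norm (f x) \<le> h x"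
  shows "norm (infsum f A) \<le> infsum h A" and "f summable_on A"
proof -
  have fa: "(\<lambda>x. norm (f x)) summable_on A" using Infinite_Sum.abs_summable_on_comparison_test'[OF hs b] .
  show fs: "f summable_on A" using abs_summable_summable[OF fa] .
  show "norm (infsum f A) \<le> infsum h A"
    by (rule norm_infsum_le[OF has_sum_infsum[OF fs] has_sum_infsum[OF hs] b])
qed

lemma infsum_dominated:
  fixes g :: "nat \<Rightarrow> 'a \<Rightarrow> 'b::banach" and G :: "'a \<Rightarrow> 'b"
  assumes lim: "\<And>x. x \<in> A \<Longrightarrow> (\<lambda>j. g j x) \<longlonglongrightarrow> G x"
    and bnd: "\<And>j x. x \<in> A \<Longrightarrow> norm (g j x) \<le> h x"
    and hs: "h summable_on A"
  shows "(\<lambda>j. infsum (g j) A) \<longlonglongrightarrow> infsum G A"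
proof (rule LIMSEQ_I)
  fix e :: real assume e: "e > 0"
  have h0: "x \<in> A \<Longrightarrow> h x \<ge> 0" for x using bnd[of x 0] norm_ge_zero order_trans by blast
  have bG: "norm (G x) \<le> h x" if x: "x \<in> A" for x
    by (rule tendsto_le[OF trivial_limit_sequentially tendsto_const tendsto_norm[OF lim[OF x]]])
       (use bnd x in auto)
  obtain F where F: "finite F" "F \<subseteq> A" "infsum h (A - F) \<le> e / 4"
    using tail_small[OF hs h0, of "e/4"] e by auto
  have "(\<lambda>j. sum (g j) F) \<longlonglongrightarrow> sum G F"
    by (rule tendsto_sum) (use lim F in auto)
  then obtain no where no: "\<And>n. n \<ge> no \<Longrightarrow> norm (sum (g n) F - sum G F) < e / 4"
    using LIMSEQ_D[of "\<lambda>j. sum (g j) F" "sum G F" "e/4"] e by auto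
  have hs': "h summable_on (A - F)" using hs by (rule summable_on_subset_banach) auto
  have split: "infsum u A = sum u F + infsum u (A - F)" if us: "u summable_on A" for u :: "'a \<Rightarrow> 'b"
  proof -
    have "infsum u A = infsum u (F \<union> (A - F))" using F by (simp add: Un_absorb1)
    also have "\<dots> = infsum u F + infsum u (A - F)"
      by (rule infsum_Un_disjoint) (use F us in \<open>auto intro: summable_on_subset_banach\<close>)
    finally show ?thesis using F by simp
  qed
  show "\<exists>no. \<forall>n\<ge>no. norm (infsum (g n) A - infsum G A) < e"
  proof (intro exI allI impI)
    fix n assume n: "n \<ge> no"
    have gs: "g n summable_on A" using norm_infsum_le_dom(2)[OF hs, of "g n"] bnd by blast
    have Gs: "G summable_on A" using norm_infsum_le_dom(2)[OF hs, of G] bG by blast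
    have t1: "norm (infsum (g n) (A - F)) \<le> e / 4"
      using norm_infsum_le_dom(1)[OF hs', of "g n"] bnd F(3) by (meson DiffD1 order_trans)
    have t2: "norm (infsum G (A - F)) \<le> e / 4"
      using norm_infsum_le_dom(1)[OF hs', of G] bG F(3) by (meson DiffD1 order_trans)
    have "infsum (g n) A - infsum G A = (sum (g n) F - sum G F) + infsum (g n) (A - F) - infsum G (A - F)"
      using split[OF gs] split[OF Gs] by (simp add: algebra_simps)
    also have "norm \<dots> \<le> norm (sum (g n) F - sum G F) + norm (infsum (g n) (A - F)) + norm (infsum G (A - F))"
      using norm_triangle_ineq4[of "(sum (g n) F - sum G F) + infsum (g n) (A - F)" "infsum G (A - F)"]
            norm_triangle_ineq[of "sum (g n) F - sum G F" "infsum (g n) (A - F)"] by linarith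
    also have "\<dots> < e" using no[OF n] t1 t2 e by linarith
    finally show "norm (infsum (g n) A - infsum G A) < e" .
  qed
qed

lemma center_sum:
  fixes c :: "'i \<Rightarrow> 'p" and h :: "'p \<Rightarrow> real"
  assumes mult: "\<And>p. finite {a\<in>I. c a = p} \<and> card {a\<in>I. c a = p} \<le> N"
    and h0: "\<And>p. h p \<ge> 0" and hs: "h summable_on UNIV"
  shows "(\<lambda>a. h (c a)) summable_on I" and "infsum (\<lambda>a. h (c a)) I \<le> real N * infsum h UNIV"
proof -
  have key: "sum (\<lambda>a. h (c a)) F \<le> real N * infsum h UNIV" if F: "finite F" "F \<subseteq> I" for F
  proof -
    have "sum (\<lambda>a. h (c a)) F = (\<Sum>p\<in>c ` F. sum (\<lambda>a. h (c a)) {x\<in>F. c x = p})"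
      by (rule sum.image_gen[OF F(1)])
    also have "\<dots> = (\<Sum>p\<in>c ` F. real (card {x\<in>F. c x = p}) * h p)"
      by (intro sum.cong refl) simp
    also have "\<dots> \<le> (\<Sum>p\<in>c ` F. real N * h p)"
    proof (intro sum_mono mult_right_mono h0)
      fix p
      have "card {x\<in>F. c x = p} \<le> card {a\<in>I. c a = p}"
        using mult[of p] F by (intro card_mono) auto
      then show "real (card {x\<in>F. c x = p}) \<le> real N" using mult[of p] by linarith
    qed
    also have "\<dots> = real N * (\<Sum>p\<in>c ` F. h p)" by (simp add: sum_distrib_left)
    also have "\<dots> \<le> real N * infsum h UNIV"
      by (intro mult_left_mono finite_sum_le_infsum hs) (use F h0 in auto)
    finally show ?thesis .
  qed
  show s: "(\<lambda>a. h (c a)) summable_on I"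
    by (rule nonneg_bdd_above_summable_on) (use h0 key in \<open>auto intro!: bdd_aboveI2\<close>)
  show "infsum (\<lambda>a. h (c a)) I \<le> real N * infsum h UNIV"
    by (rule infsum_le_finite_sums[OF s key]) auto
qed

lemma summable_Sigma_bound:
  fixes F :: "'a \<times> 'b \<Rightarrow> real"
  assumes F0: "\<And>a b. a \<in> A \<Longrightarrow> b \<in> B \<Longrightarrow> F (a, b) \<ge> 0"
    and inner: "\<And>a. a \<in> A \<Longrightarrow> (\<lambda>b. F (a, b)) summable_on B"
    and ib: "\<And>a. a \<in> A \<Longrightarrow> infsum (\<lambda>b. F (a, b)) B \<le> G a"
    and Gs: "G summable_on A"
  shows "F summable_on A \<times> B"
proof -
  have "(\<lambda>a. infsum (\<lambda>b. F (a, b)) B) summable_on A"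
    by (rule summable_on_comparison_test[OF Gs]) (use ib F0 in \<open>auto intro: infsum_nonneg\<close>)
  then have "F summable_on Sigma A (\<lambda>_. B)"
    by (intro summable_on_SigmaI[where g="\<lambda>a. infsum (\<lambda>b. F (a, b)) B"])
       (use inner F0 in auto)
  then show ?thesis by simp
qed

lemma is_l2_bound:
  assumes "\<And>n. cmod (u n) \<le> g n" and "(\<lambda>n. (g n)^2) summable_on UNIV"
  shows "is_l2 u"
  unfolding is_l2_def
  by (rule summable_on_comparison_test[OF assms(2)]) (use assms(1) in \<open>auto intro: power_mono\<close>)

lemma is_l2_point:
  assumes "is_l2 u"
  shows "(cmod (u m))^2 \<le> infsum (\<lambda>n. (cmod (u n))^2) UNIV"
proof -
  have "sum (\<lambda>n. (cmod (u n))^2) {m} \<le> infsum (\<lambda>n. (cmod (u n))^2) UNIV"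
    by (rule finite_sum_le_infsum) (use assms in \<open>auto simp: is_l2_def\<close>)
  then show ?thesis by simp
qed

lemma cmod_mult_le_sq: "cmod a * cmod b \<le> ((cmod a)^2 + (cmod b)^2) / 2"
proof -
  have "0 \<le> (cmod a - cmod b)^2" by simp
  then show ?thesis by (simp add: power2_diff)
qed

lemma l2_inner_summable:
  assumes "is_l2 u" "is_l2 v"
  shows "(\<lambda>n. cnj (u n) * v n) summable_on UNIV"
proof -
  have s: "(\<lambda>n. ((cmod (u n))^2 + (cmod (v n))^2) / 2) summable_on UNIV"
  proof -
    have "(\<lambda>n. ((cmod (u n))^2 + (cmod (v n))^2) * (1/2)) summable_on UNIV"
      using assms unfolding is_l2_def by (intro summable_on_cmult_left summable_on_add) auto
    then show ?thesis by simp
  qed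
  have "(\<lambda>n. norm (cnj (u n) * v n)) summable_on UNIV"
    by (rule Infinite_Sum.abs_summable_on_comparison_test'[OF s]) (use cmod_mult_le_sq in \<open>simp add: norm_mult\<close>)
  then show ?thesis by (rule abs_summable_summable)
qed

lemma is_l2_diff:
  assumes "is_l2 u" "is_l2 v"
  shows "is_l2 (\<lambda>n. u n - v n)"
  unfolding is_l2_def
proof (rule summable_on_comparison_test)
  show "(\<lambda>n. 2 * (cmod (u n))^2 + 2 * (cmod (v n))^2) summable_on UNIV"
    using assms unfolding is_l2_def by (intro summable_on_add summable_on_cmult_right) auto
  fix n
  have "cmod (u n - v n) \<le> cmod (u n) + cmod (v n)" by (rule norm_triangle_ineq4)
  then have "(cmod (u n - v n))^2 \<le> (cmod (u n) + cmod (v n))^2" by (intro power_mono) auto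
  also have "\<dots> \<le> 2 * (cmod (u n))^2 + 2 * (cmod (v n))^2"
    using cmod_mult_le_sq[of "u n" "v n"] by (simp add: power2_sum)
  finally show "(cmod (u n - v n))^2 \<le> 2 * (cmod (u n))^2 + 2 * (cmod (v n))^2" .
qed simp

lemma infsum_of_real':
  "(f::'a \<Rightarrow> real) summable_on A \<Longrightarrow> infsum (\<lambda>x. complex_of_real (f x)) A = complex_of_real (infsum f A)"
  by (rule infsumI, rule has_sum_of_real, rule has_sum_infsum)

lemma cnj_mult_self: "cnj z * z = complex_of_real ((cmod z)^2)"
  by (metis complex_norm_square mult.commute)

lemma exp_sq: "(exp (- a * x))^2 = exp (- (2 * a) * (x::real))"
proof -
  have "- (2 * a) * x = (- a * x) + (- a * x)" by simp
  then show ?thesis by (simp only: power2_eq_square exp_add)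
qed

lemma l2_inner_cnj: "l2_inner u w = cnj (l2_inner w u)"
  unfolding l2_inner_def by (simp flip: infsum_cnj add: mult.commute)

lemma sq_exp_bound:
  assumes "cmod z \<le> C * exp (- a * x)"
  shows "(cmod z)^2 \<le> C^2 * exp (- (2 * a) * x)"
proof -
  have "(cmod z)^2 \<le> (C * exp (- a * x))^2" by (rule power_mono[OF assms]) simp
  also have "\<dots> = C^2 * exp (- (2 * a) * x)"
    by (simp add: power_mult_distrib power2_eq_square exp_add[symmetric])
  finally show ?thesis .
qed

lemma is_l2_decay:
  assumes a: "a > 0" and d: "\<And>n. cmod (u n) \<le> C * exp (- a * lat_norm (n - p))"
  shows "is_l2 u"
proof (rule is_l2_bound[OF d])
  have "(\<lambda>n. C^2 * exp (- (2 * a) * lat_norm (n - p))) summable_on UNIV"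
    by (intro summable_on_cmult_right exp_lat_summable_shift) (use a in simp)
  then show "(\<lambda>n. (C * exp (- a * lat_norm (n - p)))^2) summable_on UNIV"
    by (simp only: power_mult_distrib exp_sq)
qed

locale locfam =
  fixes I :: "'i set" and \<psi> :: "'i \<Rightarrow> ('g::finite \<Rightarrow> int) \<Rightarrow> complex" and c :: "'i \<Rightarrow> 'g \<Rightarrow> int"
    and \<alpha> C :: real and N :: nat
  assumes alpha: "\<alpha> > 0" and Cpos: "C \<ge> 0"
    and decay: "\<And>a n. a \<in> I \<Longrightarrow> cmod (\<psi> a n) \<le> C * exp (- \<alpha> * lat_norm (n - c a))"
    and mult: "\<And>p. finite {a\<in>I. c a = p} \<and> card {a\<in>I. c a = p} \<le> N"
begin

lemma w_summable:
  assumes b: "b > 0"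
  shows "(\<lambda>a. exp (- b * lat_norm (m - c a))) summable_on I"
proof -
  have "(\<lambda>p. exp (- b * lat_norm (m - p))) summable_on UNIV"
    using exp_lat_summable_shift[OF b, of m] by (simp add: lat_norm_commute)
  then show ?thesis
    using center_sum(1)[OF mult, of "\<lambda>p. exp (- b * lat_norm (m - p))"] by simp
qed

lemma psi_l2: "a \<in> I \<Longrightarrow> is_l2 (\<psi> a)"
  by (rule is_l2_decay[OF alpha]) (rule decay)

definition v :: "('g \<Rightarrow> int) \<Rightarrow> ('g \<Rightarrow> int) \<Rightarrow> complex" where
  "v m n = infsum (\<lambda>a. cnj (\<psi> a m) * \<psi> a n) I"

definition W :: "('g \<Rightarrow> int) \<Rightarrow> real" where
  "W m = infsum (\<lambda>a. exp (- (\<alpha>/2) * lat_norm (m - c a))) I"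

lemma v_bound: "cmod (v m n) \<le> C^2 * W m * exp (- (\<alpha>/2) * lat_norm (n - m))"
proof -
  define K where "K = C^2 * exp (- (\<alpha>/2) * lat_norm (n - m))"
  have tb: "cmod (cnj (\<psi> a m) * \<psi> a n) \<le> K * exp (- (\<alpha>/2) * lat_norm (m - c a))" if a: "a \<in> I" for a
  proof -
    have "cmod (cnj (\<psi> a m) * \<psi> a n) = cmod (\<psi> a m) * cmod (\<psi> a n)" by (simp add: norm_mult)
    also have "\<dots> \<le> (C * exp (- \<alpha> * lat_norm (m - c a))) * (C * exp (- \<alpha> * lat_norm (n - c a)))"
      by (intro mult_mono decay a) (use Cpos in auto)
    also have "\<dots> = C^2 * exp (- \<alpha> * (lat_norm (m - c a) + lat_norm (n - c a)))"
      by (simp add: power2_eq_square exp_add[symmetric] algebra_simps)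
    also have "\<dots> \<le> C^2 * exp (- (\<alpha>/2) * lat_norm (n - m) + - (\<alpha>/2) * lat_norm (m - c a))"
    proof (intro mult_left_mono) 
      have t: "lat_norm (n - m) \<le> lat_norm (n - c a) + lat_norm (m - c a)" by (rule lat_norm_tri)
      have "(\<alpha>/2) * lat_norm (n - m) \<le> (\<alpha>/2) * (lat_norm (n - c a) + lat_norm (m - c a))"
        using t alpha by (intro mult_left_mono) auto
      moreover have "0 \<le> lat_norm (n - c a)" "0 \<le> lat_norm (m - c a)" by (auto simp: lat_norm_nonneg)
      moreover have "0 \<le> \<alpha> * lat_norm (n - c a)" using alpha by (simp add: lat_norm_nonneg)
      ultimately have "- \<alpha> * (lat_norm (m - c a) + lat_norm (n - c a)) \<le> - (\<alpha>/2) * lat_norm (n - m) + - (\<alpha>/2) * lat_norm (m - c a)"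
        by (simp add: algebra_simps) 
      then show "exp (- \<alpha> * (lat_norm (m - c a) + lat_norm (n - c a))) \<le> exp (- (\<alpha>/2) * lat_norm (n - m) + - (\<alpha>/2) * lat_norm (m - c a))"
        by simp
    qed simp
    also have "\<dots> = K * exp (- (\<alpha>/2) * lat_norm (m - c a))"
      unfolding K_def by (simp only: exp_add mult.assoc)
    finally show ?thesis .
  qed
  have hs: "(\<lambda>a. K * exp (- (\<alpha>/2) * lat_norm (m - c a))) summable_on I"
    by (intro summable_on_cmult_right w_summable) (use alpha in simp)
  have "cmod (v m n) \<le> infsum (\<lambda>a. K * exp (- (\<alpha>/2) * lat_norm (m - c a))) I"
    unfolding v_def by (rule norm_infsum_le_dom(1)[OF hs tb])
  also have "\<dots> = K * W m" unfolding W_def by (rule infsum_cmult_right')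
  finally show ?thesis by (simp add: K_def algebra_simps)
qed

lemma v_l2: "is_l2 (v m)"
proof -
  have "is_l2 (v m)"
  proof (rule is_l2_decay[where a="\<alpha>/2" and C="C^2 * W m" and p=m])
    show "\<alpha>/2 > 0" using alpha by simp
    show "cmod (v m n) \<le> C^2 * W m * exp (- (\<alpha>/2) * lat_norm (n - m))" for n by (rule v_bound)
  qed
  then show ?thesis .
qed

lemma v_inner:
  assumes u: "is_l2 u"
  shows "l2_inner (v m) u = infsum (\<lambda>a. \<psi> a m * l2_inner (\<psi> a) u) I"
proof -
  define X where "X n a = \<psi> a m * (cnj (\<psi> a n) * u n)" for n a
  define w where "w a = exp (- \<alpha> * lat_norm (m - c a))" for a
  define S2 where "S2 = infsum (\<lambda>d::'g \<Rightarrow> int. exp (- (2*\<alpha>) * lat_norm d)) UNIV"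
  define U where "U = infsum (\<lambda>n. (cmod (u n))^2) UNIV"
  define F where "F = (\<lambda>(a, n). C * w a * (C^2 * exp (- (2*\<alpha>) * lat_norm (n - c a)) + (cmod (u n))^2))"
  have Fab: "F (a, n) = C * w a * (C^2 * exp (- (2*\<alpha>) * lat_norm (n - c a)) + (cmod (u n))^2)" for a n
    by (simp add: F_def)
  have us: "(\<lambda>n. (cmod (u n))^2) summable_on UNIV" using u by (simp add: is_l2_def)
  have es: "(\<lambda>n. exp (- (2*\<alpha>) * lat_norm (n - p))) summable_on UNIV" for p
    by (rule exp_lat_summable_shift) (use alpha in simp)
  have ws: "w summable_on I" unfolding w_def by (rule w_summable[OF alpha])
  have w0: "w a \<ge> 0" for a by (simp add: w_def)
  have inner_s: "(\<lambda>n. F (a, n)) summable_on UNIV" for a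
    unfolding Fab by (intro summable_on_cmult_right summable_on_add es us)
  have inner_eq: "infsum (\<lambda>n. F (a, n)) UNIV = C * w a * (C^2 * S2 + U)" for a
  proof -
    have "infsum (\<lambda>n. F (a, n)) UNIV = C * w a * infsum (\<lambda>n. C^2 * exp (- (2*\<alpha>) * lat_norm (n - c a)) + (cmod (u n))^2) UNIV"
      unfolding Fab by (rule infsum_cmult_right')
    also have "infsum (\<lambda>n. C^2 * exp (- (2*\<alpha>) * lat_norm (n - c a)) + (cmod (u n))^2) UNIV
       = infsum (\<lambda>n. C^2 * exp (- (2*\<alpha>) * lat_norm (n - c a))) UNIV + U"
      unfolding U_def by (rule infsum_add) (intro summable_on_cmult_right es us)+
    also have "infsum (\<lambda>n. C^2 * exp (- (2*\<alpha>) * lat_norm (n - c a))) UNIV = C^2 * S2"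
      unfolding S2_def using exp_lat_infsum_shift[of "2*\<alpha>" "c a"] by (simp add: infsum_cmult_right')
    finally show ?thesis .
  qed
  have Fs: "F summable_on I \<times> UNIV"
  proof (rule summable_Sigma_bound[where G="\<lambda>a. w a * (C * (C^2 * S2 + U))"])
    show "F (a, b) \<ge> 0" for a b unfolding Fab using Cpos w0 by auto
    show "(\<lambda>b. F (a, b)) summable_on UNIV" for a by (rule inner_s)
    show "infsum (\<lambda>b. F (a, b)) UNIV \<le> w a * (C * (C^2 * S2 + U))" for a
      by (simp add: inner_eq algebra_simps)
    show "(\<lambda>a. w a * (C * (C^2 * S2 + U))) summable_on I"
      by (rule summable_on_cmult_left[OF ws])
  qed
  have Xb: "norm (X n a) \<le> F (a, n)" if a: "a \<in> I" for a n
  proof -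
    have "norm (X n a) = cmod (\<psi> a m) * (cmod (\<psi> a n) * cmod (u n))"
      by (simp add: X_def norm_mult)
    also have "\<dots> \<le> (C * w a) * (C^2 * exp (- (2*\<alpha>) * lat_norm (n - c a)) + (cmod (u n))^2)"
    proof (rule mult_mono)
      show "cmod (\<psi> a m) \<le> C * w a" unfolding w_def by (rule decay[OF a])
      have "cmod (\<psi> a n) * cmod (u n) \<le> ((cmod (\<psi> a n))^2 + (cmod (u n))^2) / 2"
        by (rule cmod_mult_le_sq)
      also have "\<dots> \<le> (cmod (\<psi> a n))^2 + (cmod (u n))^2" by simp
      also have "\<dots> \<le> C^2 * exp (- (2*\<alpha>) * lat_norm (n - c a)) + (cmod (u n))^2"
        using sq_exp_bound[OF decay[OF a, of n]] by simp
      finally show "cmod (\<psi> a n) * cmod (u n) \<le> C^2 * exp (- (2*\<alpha>) * lat_norm (n - c a)) + (cmod (u n))^2" .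
    qed (use Cpos w0 in auto)
    finally show ?thesis by (simp add: Fab)
  qed
  have Xn: "(\<lambda>x. norm (X (snd x) (fst x))) summable_on I \<times> UNIV"
    by (rule summable_on_comparison_test[OF Fs]) (use Xb in auto)
  have bsw: "bij_betw prod.swap (UNIV \<times> I) (I \<times> UNIV)"
    by (rule bij_betwI[where g=prod.swap]) auto
  have Xn': "(\<lambda>x. norm (X (fst x) (snd x))) summable_on UNIV \<times> I"
  proof -
    have "(\<lambda>x. norm (X (snd (prod.swap x)) (fst (prod.swap x)))) summable_on UNIV \<times> I"
      using summable_on_reindex_bij_betw[OF bsw, of "\<lambda>x. norm (X (snd x) (fst x))"] Xn by (rule iffD2)
    then show ?thesis by (simp only: fst_swap snd_swap)
  qed
  have Xs0: "(\<lambda>x. X (fst x) (snd x)) summable_on UNIV \<times> I"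
    by (rule abs_summable_summable) (rule Xn')
  have cp: "(\<lambda>(n, a). X n a) = (\<lambda>x. X (fst x) (snd x))" by auto
  have Xs: "(\<lambda>(n, a). X n a) summable_on UNIV \<times> I" unfolding cp by (rule Xs0)
  have e1: "cnj (v m n) * u n = infsum (\<lambda>a. X n a) I" for n
  proof -
    have "cnj (v m n) = infsum (\<lambda>a. \<psi> a m * cnj (\<psi> a n)) I"
      unfolding v_def by (simp flip: infsum_cnj)
    then have "cnj (v m n) * u n = infsum (\<lambda>a. \<psi> a m * cnj (\<psi> a n) * u n) I"
      by (simp add: infsum_cmult_left')
    then show ?thesis by (simp add: X_def mult.assoc)
  qed
  have "l2_inner (v m) u = infsum (\<lambda>n. infsum (\<lambda>a. X n a) I) UNIV"
    unfolding l2_inner_def by (simp add: e1)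
  also have "\<dots> = infsum (\<lambda>a. infsum (\<lambda>n. X n a) UNIV) I"
    by (rule infsum_swap_banach[OF Xs])
  also have "\<dots> = infsum (\<lambda>a. \<psi> a m * l2_inner (\<psi> a) u) I"
    unfolding X_def l2_inner_def by (simp add: infsum_cmult_right')
  finally show ?thesis .
qed

end

definition delta :: "('g \<Rightarrow> int) \<Rightarrow> ('g \<Rightarrow> int) \<Rightarrow> complex" where
  "delta m n = (if n = m then 1 else 0)"

lemma delta_l2: "is_l2 (delta (m::'g::finite \<Rightarrow> int))"
proof -
  have "((\<lambda>n. (cmod (delta m n))^2) has_sum 1) UNIV"
    by (rule has_sum_finite_neutralI[where B="{m}"]) (auto simp: delta_def)
  then show ?thesis unfolding is_l2_def by (rule has_sum_imp_summable)
qed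

lemma inner_delta: "l2_inner u (delta m) = cnj (u m)"
proof -
  have "(\<lambda>n. cnj (u n) * delta m n) = (\<lambda>n. if n = m then cnj (u m) else 0)"
    by (auto simp: delta_def)
  then show ?thesis unfolding l2_inner_def by (simp add: infsum_single')
qed

lemma inner_delta': "l2_inner (delta m) u = u m"
proof -
  have "(\<lambda>n. cnj (delta m n) * u n) = (\<lambda>n. if n = m then u m else 0)"
    by (auto simp: delta_def)
  then show ?thesis unfolding l2_inner_def by (simp add: infsum_single')
qed

lemma l2_inner_diff:
  assumes "is_l2 u" "is_l2 a" "is_l2 b"
  shows "l2_inner u (\<lambda>n. a n - b n) = l2_inner u a - l2_inner u b"
proof -
  have "l2_inner u (\<lambda>n. a n - b n) = infsum (\<lambda>n. cnj (u n) * a n - cnj (u n) * b n) UNIV"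
    unfolding l2_inner_def by (simp add: algebra_simps)
  also have "\<dots> = l2_inner u a - l2_inner u b"
    unfolding l2_inner_def by (rule infsum_diff') (use assms in \<open>auto intro: l2_inner_summable\<close>)
  finally show ?thesis .
qed

lemma l2_norm_inner:
  assumes "is_l2 u"
  shows "l2_inner u u = complex_of_real (infsum (\<lambda>n. (cmod (u n))^2) UNIV)"
  unfolding l2_inner_def cnj_mult_self
  by (rule infsum_of_real') (use assms in \<open>simp add: is_l2_def\<close>)

locale locON = locfam +
  assumes ON: "\<And>a b. a \<in> I \<Longrightarrow> b \<in> I \<Longrightarrow> l2_inner (\<psi> a) (\<psi> b) = (if a = b then 1 else 0)"
begin

lemma sq_summable: "(\<lambda>a. (cmod (\<psi> a m))^2) summable_on I"
proof (rule summable_on_comparison_test)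
  show "(\<lambda>a. C^2 * exp (- (2*\<alpha>) * lat_norm (m - c a))) summable_on I"
    by (intro summable_on_cmult_right w_summable) (use alpha in simp)
  show "(cmod (\<psi> a m))^2 \<le> C^2 * exp (- (2*\<alpha>) * lat_norm (m - c a))" if "a \<in> I" for a
    by (rule sq_exp_bound[OF decay[OF that]])
qed simp

lemma v_diag: "v m m = complex_of_real (infsum (\<lambda>a. (cmod (\<psi> a m))^2) I)"
  unfolding v_def cnj_mult_self by (rule infsum_of_real'[OF sq_summable])

lemma inner_psi_v:
  assumes b: "b \<in> I"
  shows "l2_inner (\<psi> b) (v m) = cnj (\<psi> b m)"
proof -
  have "l2_inner (v m) (\<psi> b) = infsum (\<lambda>a. \<psi> a m * l2_inner (\<psi> a) (\<psi> b)) I"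
    by (rule v_inner[OF psi_l2[OF b]])
  also have "\<dots> = infsum (\<lambda>a. if a = b then \<psi> b m else 0) I"
    by (rule infsum_cong) (use b ON in auto)
  also have "\<dots> = \<psi> b m"
  proof -
    have "((\<lambda>a. if a = b then \<psi> b m else 0) has_sum \<psi> b m) I"
      by (rule has_sum_finite_neutralI[where B="{b}"]) (use b in auto)
    then show ?thesis by (rule infsumI)
  qed
  finally show ?thesis by (subst l2_inner_cnj) simp
qed

lemma parseval_of_complete:
  assumes compl: "\<And>u. is_l2 u \<Longrightarrow> (\<forall>a\<in>I. l2_inner (\<psi> a) u = 0) \<Longrightarrow> u = (\<lambda>_. 0)"
  shows "infsum (\<lambda>a. (cmod (\<psi> a m))^2) I = 1"
proof -
  define d where "d = (\<lambda>n. delta m n - v m n)"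
  have dl: "is_l2 d" unfolding d_def by (intro is_l2_diff delta_l2 v_l2)
  have "l2_inner (\<psi> b) d = 0" if b: "b \<in> I" for b
    unfolding d_def using b
    by (simp add: l2_inner_diff psi_l2 delta_l2 v_l2 inner_delta inner_psi_v)
  then have "d = (\<lambda>_. 0)" using compl[OF dl] by blast
  then have "d m = 0" by simp
  then have "v m m = 1" by (simp add: d_def delta_def)
  then show ?thesis unfolding v_diag by simp
qed

lemma complete_of_parseval:
  assumes P: "\<And>m. infsum (\<lambda>a. (cmod (\<psi> a m))^2) I = 1"
    and u: "is_l2 u" and orth: "\<forall>a\<in>I. l2_inner (\<psi> a) u = 0"
  shows "u = (\<lambda>_. 0)"
proof
  fix m
  have vmm: "v m m = 1" unfolding v_diag P by simp
  have "l2_inner (v m) (v m) = infsum (\<lambda>a. \<psi> a m * l2_inner (\<psi> a) (v m)) I"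
    by (rule v_inner[OF v_l2])
  also have "\<dots> = infsum (\<lambda>a. complex_of_real ((cmod (\<psi> a m))^2)) I"
    by (rule infsum_cong) (simp add: inner_psi_v complex_norm_square[symmetric] del: of_real_power)
  also have "\<dots> = 1" by (simp only: infsum_of_real'[OF sq_summable] P) simp
  finally have "l2_inner (v m) (v m) = 1" .
  then have s1: "infsum (\<lambda>n. (cmod (v m n))^2) UNIV = 1"
    unfolding l2_norm_inner[OF v_l2] by simp
  have vz: "v m n = 0" if n: "n \<noteq> m" for n
  proof -
    have "sum (\<lambda>n. (cmod (v m n))^2) {n, m} \<le> infsum (\<lambda>n. (cmod (v m n))^2) UNIV"
      by (rule finite_sum_le_infsum) (use v_l2 in \<open>auto simp: is_l2_def\<close>)
    then have "(cmod (v m n))^2 + (cmod (v m m))^2 \<le> 1" using n s1 by simp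
    then have "(cmod (v m n))^2 \<le> 0" using vmm by simp
    then show ?thesis by simp
  qed
  have vd: "v m = delta m"
  proof
    fix n show "v m n = delta m n" using vz vmm by (cases "n = m") (auto simp: delta_def)
  qed
  have "u m = l2_inner (delta m) u" by (simp add: inner_delta')
  also have "\<dots> = l2_inner (v m) u" by (simp add: vd)
  also have "\<dots> = infsum (\<lambda>a. \<psi> a m * l2_inner (\<psi> a) u) I" by (rule v_inner[OF u])
  also have "\<dots> = 0" using orth by (simp add: infsum_0)
  finally show "u m = 0" .
qed

end

lemma infsum_finsum:
  fixes f :: "'i \<Rightarrow> 'a \<Rightarrow> 'b::{topological_comm_monoid_add, t2_space}"
  assumes "finite K" "\<And>a. a \<in> K \<Longrightarrow> f a summable_on A"
  shows "(\<lambda>x. \<Sum>a\<in>K. f a x) summable_on A \<and> infsum (\<lambda>x. \<Sum>a\<in>K. f a x) A = (\<Sum>a\<in>K. infsum (f a) A)"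
  using assms
proof (induction K rule: finite_induct)
  case empty then show ?case by simp
next
  case (insert a K)
  then have IH: "(\<lambda>x. \<Sum>a\<in>K. f a x) summable_on A" "infsum (\<lambda>x. \<Sum>a\<in>K. f a x) A = (\<Sum>a\<in>K. infsum (f a) A)"
    by auto
  have fa: "f a summable_on A" using insert by auto
  show ?case using insert(1,2) IH fa
    by (simp add: summable_on_add infsum_add)
qed

lemma bessel_point:
  fixes \<psi> :: "'i \<Rightarrow> ('g::finite \<Rightarrow> int) \<Rightarrow> complex"
  assumes K: "finite K" and l2: "\<And>a. a \<in> K \<Longrightarrow> is_l2 (\<psi> a)"
    and ON: "\<And>a b. a \<in> K \<Longrightarrow> b \<in> K \<Longrightarrow> l2_inner (\<psi> a) (\<psi> b) = (if a = b then 1 else 0)"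
  shows "(\<Sum>a\<in>K. (cmod (\<psi> a n))^2) \<le> 1"
proof -
  define s where "s = (\<Sum>a\<in>K. (cmod (\<psi> a n))^2)"
  define w where "w x = (\<Sum>a\<in>K. cnj (\<psi> a n) * \<psi> a x)" for x
  define T where "T a b x = \<psi> a n * cnj (\<psi> b n) * (cnj (\<psi> a x) * \<psi> b x)" for a b x
  have ww: "cnj (w x) * w x = (\<Sum>a\<in>K. \<Sum>b\<in>K. T a b x)" for x
    unfolding w_def T_def by (simp add: sum_product algebra_simps)
  have Ts: "T a b summable_on UNIV" if "a \<in> K" "b \<in> K" for a b
    unfolding T_def by (intro summable_on_cmult_right l2_inner_summable l2 that)
  have Ti: "infsum (T a b) UNIV = \<psi> a n * cnj (\<psi> b n) * l2_inner (\<psi> a) (\<psi> b)" for a b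
    unfolding T_def l2_inner_def by (rule infsum_cmult_right')
  have inner: "(\<lambda>x. \<Sum>b\<in>K. T a b x) summable_on UNIV \<and> infsum (\<lambda>x. \<Sum>b\<in>K. T a b x) UNIV = (\<Sum>b\<in>K. infsum (T a b) UNIV)"
    if a: "a \<in> K" for a
    by (rule infsum_finsum[OF K]) (use Ts a in auto)
  have outer: "(\<lambda>x. \<Sum>a\<in>K. \<Sum>b\<in>K. T a b x) summable_on UNIV \<and>
      infsum (\<lambda>x. \<Sum>a\<in>K. \<Sum>b\<in>K. T a b x) UNIV = (\<Sum>a\<in>K. infsum (\<lambda>x. \<Sum>b\<in>K. T a b x) UNIV)"
    by (rule infsum_finsum[OF K]) (use inner in auto)
  have val: "(\<Sum>a\<in>K. infsum (\<lambda>x. \<Sum>b\<in>K. T a b x) UNIV) = complex_of_real s"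
  proof -
    have "(\<Sum>a\<in>K. infsum (\<lambda>x. \<Sum>b\<in>K. T a b x) UNIV) = (\<Sum>a\<in>K. \<Sum>b\<in>K. \<psi> a n * cnj (\<psi> b n) * l2_inner (\<psi> a) (\<psi> b))"
      using inner by (simp add: Ti)
    also have "\<dots> = (\<Sum>a\<in>K. \<Sum>b\<in>K. if b = a then \<psi> a n * cnj (\<psi> a n) else 0)"
      by (intro sum.cong refl) (simp add: ON)
    also have "\<dots> = (\<Sum>a\<in>K. \<psi> a n * cnj (\<psi> a n))" using K by (simp add: sum.delta)
    also have "\<dots> = complex_of_real s" unfolding s_def by (simp add: complex_norm_square del: of_real_power)
    finally show ?thesis .
  qed
  have cs: "(\<lambda>x. complex_of_real ((cmod (w x))^2)) summable_on UNIV"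
    using outer by (simp add: ww[symmetric] cnj_mult_self)
  have rs: "(\<lambda>x. (cmod (w x))^2) summable_on UNIV"
    using summable_on_Re[OF cs] by simp
  have "complex_of_real (infsum (\<lambda>x. (cmod (w x))^2) UNIV) = infsum (\<lambda>x. complex_of_real ((cmod (w x))^2)) UNIV"
    by (rule infsum_of_real'[OF rs, symmetric])
  also have "\<dots> = complex_of_real s"
    using outer val by (simp add: ww[symmetric] cnj_mult_self)
  finally have ns: "infsum (\<lambda>x. (cmod (w x))^2) UNIV = s" by simp
  have wn: "w n = complex_of_real s" unfolding w_def s_def by (simp add: cnj_mult_self)
  have "(cmod (w n))^2 \<le> s" using is_l2_point[of w n] rs ns by (simp add: is_l2_def)
  moreover have s0: "s \<ge> 0" unfolding s_def by (simp add: sum_nonneg)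
  ultimately have "s^2 \<le> s" using wn by simp
  then have "s \<le> 1"
  proof (rule contrapos_pp)
    assume "\<not> s \<le> 1"
    then have "s * 1 < s * s" by (intro mult_strict_left_mono) auto
    then show "\<not> s^2 \<le> s" by (simp add: power2_eq_square)
  qed
  then show ?thesis by (simp add: s_def)
qed

lemma mult_bound:
  assumes alpha: "\<alpha> > 0" and C0: "C \<ge> 0"
  shows "\<exists>N::nat. \<forall>(I::'i set) (\<psi>::'i \<Rightarrow> ('g::finite \<Rightarrow> int) \<Rightarrow> complex) c.
     (\<forall>a\<in>I. \<forall>n. cmod (\<psi> a n) \<le> C * exp (- \<alpha> * lat_norm (n - c a))) \<and>
     (\<forall>a\<in>I. \<forall>b\<in>I. l2_inner (\<psi> a) (\<psi> b) = (if a = b then 1 else 0)) \<longrightarrow>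
     (\<forall>p. finite {a\<in>I. c a = p} \<and> card {a\<in>I. c a = p} \<le> N)"
proof -
  define h where "h d = C^2 * exp (- (2*\<alpha>) * lat_norm (d::'g \<Rightarrow> int))" for d
  have hs: "h summable_on UNIV" unfolding h_def
    by (intro summable_on_cmult_right exp_lat_summable) (use alpha in simp)
  obtain F0 where F0: "finite F0" "infsum h (UNIV - F0) \<le> 1/2"
    using tail_small[OF hs, of "1/2"] by (auto simp: h_def)
  show ?thesis
  proof (intro exI allI impI)
    fix I :: "'i set" and \<psi> :: "'i \<Rightarrow> ('g \<Rightarrow> int) \<Rightarrow> complex" and c p
    assume A: "(\<forall>a\<in>I. \<forall>n. cmod (\<psi> a n) \<le> C * exp (- \<alpha> * lat_norm (n - c a))) \<and>
       (\<forall>a\<in>I. \<forall>b\<in>I. l2_inner (\<psi> a) (\<psi> b) = (if a = b then 1 else 0))"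
    then have dec: "\<And>a n. a \<in> I \<Longrightarrow> cmod (\<psi> a n) \<le> C * exp (- \<alpha> * lat_norm (n - c a))"
      and ON: "\<And>a b. a \<in> I \<Longrightarrow> b \<in> I \<Longrightarrow> l2_inner (\<psi> a) (\<psi> b) = (if a = b then 1 else 0)"
      by auto
    have l2: "a \<in> I \<Longrightarrow> is_l2 (\<psi> a)" for a by (rule is_l2_decay[OF alpha dec])
    define B where "B = (\<lambda>d. d + p) ` F0"
    have fB: "finite B" using F0 by (simp add: B_def)
    have cB: "card B \<le> card F0" unfolding B_def by (rule card_image_le[OF F0(1)])
    have mass: "1/2 \<le> (\<Sum>n\<in>B. (cmod (\<psi> a n))^2)" if a: "a \<in> I" "c a = p" for a
    proof -
      have ps: "(\<lambda>n. (cmod (\<psi> a n))^2) summable_on UNIV" using l2[OF a(1)] by (simp add: is_l2_def)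
      have "complex_of_real (infsum (\<lambda>n. (cmod (\<psi> a n))^2) UNIV) = 1"
        using ON[OF a(1) a(1)] l2_norm_inner[OF l2[OF a(1)]] by simp
      then have tot: "infsum (\<lambda>n. (cmod (\<psi> a n))^2) UNIV = 1" by simp
      have "infsum (\<lambda>n. (cmod (\<psi> a n))^2) UNIV = infsum (\<lambda>n. (cmod (\<psi> a n))^2) (B \<union> (UNIV - B))"
        by simp
      also have "\<dots> = infsum (\<lambda>n. (cmod (\<psi> a n))^2) B + infsum (\<lambda>n. (cmod (\<psi> a n))^2) (UNIV - B)"
        by (rule infsum_Un_disjoint) (use ps in \<open>auto intro: summable_on_subset_banach\<close>)
      finally have split: "1 = (\<Sum>n\<in>B. (cmod (\<psi> a n))^2) + infsum (\<lambda>n. (cmod (\<psi> a n))^2) (UNIV - B)"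
        using tot fB by simp
      define f where "f n = C^2 * exp (- (2*\<alpha>) * lat_norm (n - p))" for n
      have fs: "f summable_on UNIV" unfolding f_def
        by (intro summable_on_cmult_right exp_lat_summable_shift) (use alpha in simp)
      have "infsum (\<lambda>n. (cmod (\<psi> a n))^2) (UNIV - B) \<le> infsum f (UNIV - B)"
      proof (rule infsum_mono)
        show "(\<lambda>n. (cmod (\<psi> a n))^2) summable_on UNIV - B" using ps by (rule summable_on_subset_banach) auto
        show "f summable_on UNIV - B" using fs by (rule summable_on_subset_banach) auto
        show "(cmod (\<psi> a n))^2 \<le> f n" for n unfolding f_def using sq_exp_bound[OF dec[OF a(1), of n]] a(2) by simp
      qed
      also have "infsum f (UNIV - B) = infsum (\<lambda>d. f (d + p)) (UNIV - F0)"
      proof (rule infsum_reindex_bij_betw[symmetric])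
        show "bij_betw (\<lambda>d. d + p) (UNIV - F0) (UNIV - B)"
          by (rule bij_betwI[where g="\<lambda>n. n - p"]) (auto simp: B_def image_iff, metis diff_add_cancel)
      qed
      also have "\<dots> = infsum h (UNIV - F0)" unfolding f_def h_def by simp
      finally show ?thesis using F0(2) split by linarith
    qed
    have cardK: "card K \<le> 2 * card F0" if K: "finite K" "K \<subseteq> {a\<in>I. c a = p}" for K
    proof -
      have "real (card K) * (1/2) = (\<Sum>a\<in>K. 1/2)" by simp
      also have "\<dots> \<le> (\<Sum>a\<in>K. \<Sum>n\<in>B. (cmod (\<psi> a n))^2)"
        by (rule sum_mono) (use K mass in auto)
      also have "\<dots> = (\<Sum>n\<in>B. \<Sum>a\<in>K. (cmod (\<psi> a n))^2)" by (rule sum.swap)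
      also have "\<dots> \<le> (\<Sum>n\<in>B. 1)"
      proof (rule sum_mono)
        have Kl2: "\<And>a. a \<in> K \<Longrightarrow> is_l2 (\<psi> a)" using K l2 by blast
        have KON: "\<And>a b. a \<in> K \<Longrightarrow> b \<in> K \<Longrightarrow> l2_inner (\<psi> a) (\<psi> b) = (if a = b then 1 else 0)"
          using K ON by blast
        show "(\<Sum>a\<in>K. (cmod (\<psi> a n))^2) \<le> 1" for n by (rule bessel_point[OF K(1) Kl2 KON])
      qed
      also have "\<dots> = real (card B)" by simp
      also have "\<dots> \<le> real (card F0)" using cB by simp
      finally show ?thesis by linarith
    qed
    have fin: "finite {a\<in>I. c a = p}"
    proof (rule ccontr)
      assume "infinite {a\<in>I. c a = p}"
      then obtain K where K: "finite K" "card K = 2 * card F0 + 1" "K \<subseteq> {a\<in>I. c a = p}"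
        using infinite_arbitrarily_large by blast
      from cardK[OF K(1) K(3)] K(2) show False by linarith
    qed
    show "finite {a\<in>I. c a = p} \<and> card {a\<in>I. c a = p} \<le> 2 * card F0"
      using fin cardK[OF fin subset_refl] by blast
  qed
qed

lemma diag_conv:
  fixes X :: "nat \<Rightarrow> 'k::countable \<Rightarrow> complex"
  assumes b: "\<And>k j. cmod (X j k) \<le> B k"
  shows "\<exists>r. strict_mono r \<and> (\<forall>k. convergent (\<lambda>j. X (r j) k))"
proof -
  define P where "P n s = convergent (\<lambda>j. X (s j) (from_nat n))" for n and s :: "nat \<Rightarrow> nat"
  interpret S: subseqs P
  proof
    fix n and s :: "nat \<Rightarrow> nat" assume s: "strict_mono s"
    have sc: "seq_compact (cball (0::complex) (B (from_nat n)))"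
      by (rule compact_imp_seq_compact[OF compact_cball])
    have "\<forall>j. X (s j) (from_nat n) \<in> cball 0 (B (from_nat n))" using b by auto
    then obtain l r where r0: "l \<in> cball 0 (B (from_nat n))" and r: "strict_mono r" "((\<lambda>j. X (s j) (from_nat n)) \<circ> r) \<longlonglongrightarrow> l"
      by (rule seq_compactE[OF sc])
    then have "P n (s \<circ> r)" unfolding P_def convergent_def by (auto simp: o_def)
    with r show "\<exists>r'. strict_mono r' \<and> P n (s \<circ> r')" by blast
  qed
  have stable: "P n (s \<circ> r)" if "strict_mono r" "P n s" for r s n
  proof -
    from that(2) obtain l where "(\<lambda>j. X (s j) (from_nat n)) \<longlonglongrightarrow> l" unfolding P_def convergent_def by blast
    from LIMSEQ_subseq_LIMSEQ[OF this that(1)] show ?thesis unfolding P_def convergent_def by (auto simp: o_def)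
  qed
  have "convergent (\<lambda>j. X (S.diagseq j) k)" for k
  proof -
    have "P (to_nat k) (S.diagseq \<circ> (+) (Suc (to_nat k)))" by (rule S.diagseq_holds[OF stable])
    then have "convergent (\<lambda>j. X (S.diagseq (j + Suc (to_nat k))) k)"
      unfolding P_def by (simp add: o_def add.commute)
    then show ?thesis by (subst (asm) convergent_ignore_initial_segment)
  qed
  then show ?thesis using S.subseq_diagseq by blast
qed

lemma conv_nat_eventually_const:
  assumes "convergent (\<lambda>j. complex_of_nat (a j))"
  shows "\<exists>M. \<forall>j\<ge>M. a j = a M"
proof -
  have "Cauchy (\<lambda>j. complex_of_nat (a j))" using assms by (rule convergent_Cauchy)
  then obtain M where M: "\<And>m n. m \<ge> M \<Longrightarrow> n \<ge> M \<Longrightarrow> dist (complex_of_nat (a m)) (complex_of_nat (a n)) < 1"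
    unfolding Cauchy_def by (meson zero_less_one)
  have "a j = a M" if "j \<ge> M" for j
  proof -
    have "dist (complex_of_nat (a j)) (complex_of_nat (a M)) < 1" using M[OF that order_refl] .
    then have "cmod (complex_of_nat (a j) - complex_of_nat (a M)) < 1" by (simp only: dist_norm)
    moreover have "complex_of_nat (a j) - complex_of_nat (a M) = complex_of_real (real (a j) - real (a M))" by simp
    ultimately have "\<bar>real (a j) - real (a M)\<bar> < 1" by (simp only: norm_of_real)
    then show ?thesis by linarith
  qed
  then show ?thesis by blast
qed

definition hop :: "(('g::finite \<Rightarrow> int) \<Rightarrow> real) \<Rightarrow> (('g \<Rightarrow> int) \<Rightarrow> complex) \<Rightarrow> ('g \<Rightarrow> int) \<Rightarrow> complex" where
  "hop V u n = (\<Sum>m\<in>{m. lat_norm (m - n) = 1}. u m) + complex_of_real (V n) * u n"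

lemma schr_hop: "schr_op T f \<omega> = hop (\<lambda>n. f (tpow T n \<omega>))"
  by (intro ext) (simp add: schr_op_def hop_def)

lemma hop_tendsto:
  assumes "\<And>n. (\<lambda>j. Vs j n) \<longlonglongrightarrow> V n" "\<And>n. (\<lambda>j. u j n) \<longlonglongrightarrow> w n"
  shows "(\<lambda>j. hop (Vs j) (u j) n) \<longlonglongrightarrow> hop V w n"
  unfolding hop_def by (intro tendsto_intros tendsto_sum assms)

lemma eigen_limit:
  assumes hl: "\<And>n. (\<lambda>j. hop (Vs j) (u j) n) \<longlonglongrightarrow> hop V w n"
    and ul: "\<And>n. (\<lambda>j. u j n) \<longlonglongrightarrow> w n"
    and ev: "\<And>j. j \<ge> M \<Longrightarrow> hop (Vs j) (u j) = (\<lambda>n. e j * u j n)"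
    and nz: "w n0 \<noteq> 0"
  shows "\<exists>E. hop V w = (\<lambda>n. E * w n)"
proof -
  have evn: "eventually (\<lambda>j. hop (Vs j) (u j) n = e j * u j n) sequentially" for n
    unfolding eventually_sequentially by (intro exI[of _ M] allI impI) (simp add: ev)
  have eu: "(\<lambda>j. e j * u j n) \<longlonglongrightarrow> hop V w n" for n
    by (rule Lim_transform_eventually[OF hl evn])
  have q: "(\<lambda>j. (e j * u j n0) / u j n0) \<longlonglongrightarrow> hop V w n0 / w n0"
    by (rule tendsto_divide[OF eu ul nz])
  have "eventually (\<lambda>j. u j n0 \<noteq> 0) sequentially"
    by (rule tendsto_imp_eventually_ne[OF ul nz])
  then have "eventually (\<lambda>j. (e j * u j n0) / u j n0 = e j) sequentially"
    by (rule eventually_mono) simp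
  then have el: "e \<longlonglongrightarrow> hop V w n0 / w n0"
    by (rule Lim_transform_eventually[OF q])
  show ?thesis
  proof (intro exI ext)
    fix n
    have "(\<lambda>j. e j * u j n) \<longlonglongrightarrow> hop V w n0 / w n0 * w n" by (intro tendsto_mult el ul)
    from LIMSEQ_unique[OF eu this] show "hop V w n = hop V w n0 / w n0 * w n" .
  qed
qed

lemma group_by_center:
  fixes f :: "nat \<Rightarrow> real" and cc :: "nat \<Rightarrow> 'p"
  assumes fs: "f summable_on UNIV" and fin: "\<And>p. finite {k. cc k = p}"
  shows "infsum f UNIV = infsum (\<lambda>p. sum f {k. cc k = p}) UNIV"
proof -
  have bij: "bij_betw (\<lambda>k. (cc k, k)) UNIV (Sigma UNIV (\<lambda>p. {k. cc k = p}))"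
    by (rule bij_betwI[where g=snd]) auto
  have e1: "infsum (\<lambda>x. f (snd x)) (Sigma UNIV (\<lambda>p. {k. cc k = p})) = infsum f UNIV"
    using infsum_reindex_bij_betw[OF bij, of "\<lambda>x. f (snd x)"] by simp
  have s1: "(\<lambda>x. f (snd x)) summable_on (Sigma UNIV (\<lambda>p. {k. cc k = p}))"
    using summable_on_reindex_bij_betw[OF bij, of "\<lambda>x. f (snd x)"] fs by simp
  have "infsum (\<lambda>p. infsum (\<lambda>k. f (snd (p, k))) {k. cc k = p}) UNIV = infsum (\<lambda>x. f (snd x)) (Sigma UNIV (\<lambda>p. {k. cc k = p}))"
    by (rule infsum_Sigma_banach[OF s1])
  then show ?thesis using e1 fin by simp
qed

locale limdata =
  fixes Vs :: "nat \<Rightarrow> ('g::finite \<Rightarrow> int) \<Rightarrow> real" and V :: "('g \<Rightarrow> int) \<Rightarrow> real"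
    and \<alpha> C :: real and \<phi> :: "nat \<Rightarrow> nat \<Rightarrow> ('g \<Rightarrow> int) \<Rightarrow> complex"
    and E :: "nat \<Rightarrow> nat \<Rightarrow> complex" and cc :: "nat \<Rightarrow> nat \<Rightarrow> 'g \<Rightarrow> int" and N :: nat
  assumes alpha: "\<alpha> > 0" and Cpos: "C > 0"
    and limV: "\<And>n. (\<lambda>j. Vs j n) \<longlonglongrightarrow> V n"
    and l2: "\<And>j k. is_l2 (\<phi> j k)"
    and ON: "\<And>j k k'. l2_inner (\<phi> j k) (\<phi> j k') = (if k = k' then 1 else 0)"
    and compl: "\<And>j u. is_l2 u \<Longrightarrow> (\<forall>k. l2_inner (\<phi> j k) u = 0) \<Longrightarrow> u = (\<lambda>_. 0)"
    and eig: "\<And>j k. hop (Vs j) (\<phi> j k) = (\<lambda>n. E j k * \<phi> j k n)"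
    and dec: "\<And>j k m. cmod (\<phi> j k m) \<le> C * exp (- \<alpha> * lat_norm (m - cc j k))"
    and mb: "\<And>j p. finite {k. cc j k = p} \<and> card {k. cc j k = p} \<le> N"
begin

definition cnt where "cnt j p = card {k. cc j k = p}"
definition lst where "lst j p = sorted_list_of_set {k. cc j k = p}"
definition idx where "idx j p i = lst j p ! i"
definition \<Phi> where "\<Phi> j p i m = (if i < cnt j p then \<phi> j (idx j p i) m else 0)"

lemma fin: "finite {k. cc j k = p}" using mb by blast
lemma cnt_le: "cnt j p \<le> N" using mb by (simp add: cnt_def)
lemma len: "length (lst j p) = cnt j p" by (simp add: lst_def cnt_def fin)
lemma distl: "distinct (lst j p)" by (simp add: lst_def)
lemma setl: "set (lst j p) = {k. cc j k = p}" by (simp add: lst_def fin)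

lemma idx_c: "i < cnt j p \<Longrightarrow> cc j (idx j p i) = p"
proof -
  assume "i < cnt j p"
  then have "idx j p i \<in> set (lst j p)" by (simp add: idx_def len)
  then show ?thesis by (simp add: setl)
qed

lemma idx_inj:
  assumes "i < cnt j p" "i' < cnt j p'" "idx j p i = idx j p' i'"
  shows "p = p' \<and> i = i'"
proof -
  have pp: "p = p'" using idx_c[OF assms(1)] idx_c[OF assms(2)] assms(3) by simp
  then have "lst j p ! i = lst j p ! i'" using assms(3) by (simp add: idx_def)
  then have "i = i'" using assms(1,2) pp distl[of j p] by (simp add: len nth_eq_iff_index_eq)
  with pp show ?thesis by simp
qed

lemma idx_surj: "\<exists>i < cnt j (cc j k). idx j (cc j k) i = k"
proof -
  have "k \<in> set (lst j (cc j k))" by (simp add: setl)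
  then obtain i where "i < length (lst j (cc j k))" "lst j (cc j k) ! i = k" by (auto simp: in_set_conv_nth)
  then show ?thesis by (auto simp: idx_def len)
qed

lemma Phi_dec: "cmod (\<Phi> j p i m) \<le> C * exp (- \<alpha> * lat_norm (m - p))"
  using dec[of j "idx j p i" m] idx_c[of i j p] Cpos by (auto simp: \<Phi>_def)

lemma exp_le1: "exp (- \<alpha> * lat_norm x) \<le> 1"
  using alpha lat_norm_nonneg[of x] by simp

lemma Phi_bnd: "cmod (\<Phi> j p i m) \<le> C"
  using Phi_dec[of j p i m] exp_le1[of "m - p"] Cpos
  by (smt (verit) mult_left_le)

definition X where "X j k = (case k of Inl p \<Rightarrow> complex_of_nat (cnt j p) | Inr (p, i, m) \<Rightarrow> \<Phi> j p i m)"

lemma ex_r: "\<exists>r. strict_mono r \<and> (\<forall>k. convergent (\<lambda>j. X (r j) k))"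
proof (rule diag_conv[where B="\<lambda>k. case k of Inl p \<Rightarrow> real N | Inr _ \<Rightarrow> C"])
  fix k j
  show "cmod (X j k) \<le> (case k of Inl p \<Rightarrow> real N | Inr _ \<Rightarrow> C)"
    using cnt_le Phi_bnd by (auto simp: X_def split: sum.splits prod.splits)
qed

definition r where "r = (SOME r. strict_mono r \<and> (\<forall>k. convergent (\<lambda>j. X (r j) k)))"

lemma r: "strict_mono r" "\<And>k. convergent (\<lambda>j. X (r j) k)"
  using someI_ex[OF ex_r] unfolding r_def by blast+

lemma cnt_conv: "convergent (\<lambda>j. complex_of_nat (cnt (r j) p))"
  using r(2)[of "Inl p"] by (simp add: X_def)

definition M where "M p = (SOME M. \<forall>j\<ge>M. cnt (r j) p = cnt (r M) p)"
definition Np where "Np p = cnt (r (M p)) p"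

lemma M: "j \<ge> M p \<Longrightarrow> cnt (r j) p = Np p"
proof -
  have "\<exists>M. \<forall>j\<ge>M. cnt (r j) p = cnt (r M) p" by (rule conv_nat_eventually_const[OF cnt_conv])
  from someI_ex[OF this] show "j \<ge> M p \<Longrightarrow> cnt (r j) p = Np p" unfolding M_def Np_def by blast
qed

lemma Np_le: "Np p \<le> N" by (simp add: Np_def cnt_le)

definition \<psi> where "\<psi> p i m = lim (\<lambda>j. \<Phi> (r j) p i m)"

lemma psi_lim: "(\<lambda>j. \<Phi> (r j) p i m) \<longlonglongrightarrow> \<psi> p i m"
proof -
  have "convergent (\<lambda>j. \<Phi> (r j) p i m)" using r(2)[of "Inr (p, i, m)"] by (simp add: X_def)
  then show ?thesis unfolding \<psi>_def by (simp add: convergent_LIMSEQ_iff)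
qed

lemma psi_dec: "cmod (\<psi> p i m) \<le> C * exp (- \<alpha> * lat_norm (m - p))"
  by (rule tendsto_le[OF trivial_limit_sequentially tendsto_const tendsto_norm[OF psi_lim]])
     (intro always_eventually allI Phi_dec)

lemma eventually_shift_eq:
  fixes f :: "nat \<Rightarrow> 'a::t2_space"
  assumes "f \<longlonglongrightarrow> a" "\<And>j. j \<ge> K \<Longrightarrow> f j = b"
  shows "a = b"
proof -
  have "(\<lambda>j. f (j + K)) \<longlonglongrightarrow> a" by (rule LIMSEQ_ignore_initial_segment[OF assms(1)])
  moreover have "(\<lambda>j. f (j + K)) = (\<lambda>j. b)" using assms(2) by auto
  ultimately have "(\<lambda>j. b) \<longlonglongrightarrow> a" by simp
  from LIMSEQ_unique[OF this tendsto_const] show ?thesis by simp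
qed

lemma psi_zero: "i \<ge> Np p \<Longrightarrow> \<psi> p i m = 0"
  by (rule eventually_shift_eq[OF psi_lim, of "M p"]) (simp add: \<Phi>_def M)

lemma Phi_valid: "i < Np p \<Longrightarrow> j \<ge> M p \<Longrightarrow> \<Phi> (r j) p i = \<phi> (r j) (idx (r j) p i)"
  by (intro ext) (simp add: \<Phi>_def M)

definition II where "II = {a. snd a < Np (fst a)}"
definition \<psi>' where "\<psi>' a = \<psi> (fst a) (snd a)"

lemma inner_lim:
  "(\<lambda>j. l2_inner (\<Phi> (r j) p i) (\<Phi> (r j) q i')) \<longlonglongrightarrow> l2_inner (\<psi> p i) (\<psi> q i')"
  unfolding l2_inner_def
proof (rule infsum_dominated[where h="\<lambda>n. C^2 * exp (- \<alpha> * lat_norm (n - p))"])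
  show "(\<lambda>j. cnj (\<Phi> (r j) p i n) * \<Phi> (r j) q i' n) \<longlonglongrightarrow> cnj (\<psi> p i n) * \<psi> q i' n" for n
    by (intro tendsto_mult tendsto_cnj psi_lim)
  show "(\<lambda>n. C^2 * exp (- \<alpha> * lat_norm (n - p))) summable_on UNIV"
    by (intro summable_on_cmult_right exp_lat_summable_shift alpha)
  show "norm (cnj (\<Phi> (r j) p i n) * \<Phi> (r j) q i' n) \<le> C^2 * exp (- \<alpha> * lat_norm (n - p))" for j n
  proof -
    have "norm (cnj (\<Phi> (r j) p i n) * \<Phi> (r j) q i' n) = cmod (\<Phi> (r j) p i n) * cmod (\<Phi> (r j) q i' n)"
      by (simp add: norm_mult)
    also have "\<dots> \<le> (C * exp (- \<alpha> * lat_norm (n - p))) * C"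
      by (intro mult_mono Phi_dec Phi_bnd) (use Cpos in auto)
    finally show ?thesis by (simp add: power2_eq_square algebra_simps)
  qed
qed

lemma ON_psi:
  assumes a: "a \<in> II" and b: "b \<in> II"
  shows "l2_inner (\<psi>' a) (\<psi>' b) = (if a = b then 1 else 0)"
proof -
  obtain p i where a': "a = (p, i)" by (cases a)
  obtain q i' where b': "b = (q, i')" by (cases b)
  have ip: "i < Np p" and iq: "i' < Np q" using a b a' b' by (auto simp: II_def)
  define K where "K = max (M p) (M q)"
  have "l2_inner (\<psi> p i) (\<psi> q i') = (if a = b then 1 else 0)"
  proof (rule eventually_shift_eq[OF inner_lim, of K])
    fix j assume j: "j \<ge> K"
    have jp: "j \<ge> M p" and jq: "j \<ge> M q" using j by (auto simp: K_def)
    have cp: "i < cnt (r j) p" and cq: "i' < cnt (r j) q" using M[OF jp] M[OF jq] ip iq by auto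
    have "l2_inner (\<Phi> (r j) p i) (\<Phi> (r j) q i') = l2_inner (\<phi> (r j) (idx (r j) p i)) (\<phi> (r j) (idx (r j) q i'))"
      by (simp add: Phi_valid[OF ip jp] Phi_valid[OF iq jq])
    also have "\<dots> = (if a = b then 1 else 0)"
      using idx_inj[OF cp cq] by (auto simp: ON a' b')
    finally show "l2_inner (\<Phi> (r j) p i) (\<Phi> (r j) q i') = (if a = b then 1 else 0)" .
  qed
  then show ?thesis by (simp add: \<psi>'_def a' b')
qed

lemma mult_psi: "finite {a\<in>II. fst a = p} \<and> card {a\<in>II. fst a = p} \<le> N"
proof -
  have eq: "{a\<in>II. fst a = p} = (\<lambda>i. (p, i)) ` {..<Np p}" by (auto simp: II_def)
  have "card ((\<lambda>i. (p, i)) ` {..<Np p}) = Np p" by (subst card_image) (auto simp: inj_on_def)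
  then show ?thesis unfolding eq using Np_le by simp
qed

sublocale F: locON II \<psi>' fst \<alpha> C N
proof
  show "\<alpha> > 0" by (rule alpha)
  show "C \<ge> 0" using Cpos by simp
  show "cmod (\<psi>' a n) \<le> C * exp (- \<alpha> * lat_norm (n - fst a))" for a n unfolding \<psi>'_def by (rule psi_dec)
  show "finite {a\<in>II. fst a = p} \<and> card {a\<in>II. fst a = p} \<le> N" for p by (rule mult_psi)
  show "a \<in> II \<Longrightarrow> b \<in> II \<Longrightarrow> l2_inner (\<psi>' a) (\<psi>' b) = (if a = b then 1 else 0)" for a b by (rule ON_psi)
qed

end

context limdata
begin

lemma parseval_j: "infsum (\<lambda>k. (cmod (\<phi> j k m))^2) UNIV = 1"
proof -
  interpret J: locON UNIV "\<phi> j" "cc j" \<alpha> C N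
  proof
    show "\<alpha> > 0" by (rule alpha)
    show "C \<ge> 0" using Cpos by simp
    show "cmod (\<phi> j a n) \<le> C * exp (- \<alpha> * lat_norm (n - cc j a))" for a n by (rule dec)
    show "finite {a\<in>UNIV. cc j a = p} \<and> card {a\<in>UNIV. cc j a = p} \<le> N" for p using mb by simp
    show "l2_inner (\<phi> j a) (\<phi> j b) = (if a = b then 1 else 0)" for a b by (rule ON)
  qed
  show ?thesis by (rule J.parseval_of_complete) (use compl in blast)
qed

lemma sq_summable_j: "(\<lambda>k. (cmod (\<phi> j k m))^2) summable_on UNIV"
proof (rule summable_on_comparison_test)
  show "(\<lambda>k. (cmod (\<phi> j k m))^2) summable_on UNIV"
    using l2 ON parseval_j[of j m] by (metis infsum_not_exists zero_neq_one)
qed auto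

lemma G_eq: "infsum (\<lambda>k. (cmod (\<phi> j k m))^2) UNIV = infsum (\<lambda>p. \<Sum>i<N. (cmod (\<Phi> j p i m))^2) UNIV"
proof -
  have "infsum (\<lambda>k. (cmod (\<phi> j k m))^2) UNIV = infsum (\<lambda>p. sum (\<lambda>k. (cmod (\<phi> j k m))^2) {k. cc j k = p}) UNIV"
    by (rule group_by_center[OF sq_summable_j fin])
  also have "\<dots> = infsum (\<lambda>p. \<Sum>i<N. (cmod (\<Phi> j p i m))^2) UNIV"
  proof (rule infsum_cong)
    fix p
    have bij: "bij_betw (idx j p) {..<cnt j p} {k. cc j k = p}"
    proof -
      have "bij_betw ((!) (lst j p)) {..<cnt j p} {k. cc j k = p}"
        by (rule bij_betw_nth) (simp_all add: distl len setl)
      then show ?thesis by (simp add: idx_def[abs_def])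
    qed
    have "sum (\<lambda>k. (cmod (\<phi> j k m))^2) {k. cc j k = p} = (\<Sum>i<cnt j p. (cmod (\<phi> j (idx j p i) m))^2)"
      by (rule sum.reindex_bij_betw[OF bij, symmetric])
    also have "\<dots> = (\<Sum>i<cnt j p. (cmod (\<Phi> j p i m))^2)"
      by (rule sum.cong) (simp_all add: \<Phi>_def)
    also have "\<dots> = (\<Sum>i<N. (cmod (\<Phi> j p i m))^2)"
      by (rule sum.mono_neutral_left) (use cnt_le[of j p] in \<open>auto simp: \<Phi>_def\<close>)
    finally show "sum (\<lambda>k. (cmod (\<phi> j k m))^2) {k. cc j k = p} = (\<Sum>i<N. (cmod (\<Phi> j p i m))^2)" .
  qed
  finally show ?thesis .
qed

lemma parseval_psi: "infsum (\<lambda>a. (cmod (\<psi>' a m))^2) II = 1"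
proof -
  define h where "h p = real N * (C^2 * exp (- (2*\<alpha>) * lat_norm (p - m)))" for p
  have lim: "(\<lambda>j. infsum (\<lambda>p. \<Sum>i<N. (cmod (\<Phi> (r j) p i m))^2) UNIV) \<longlonglongrightarrow> infsum (\<lambda>p. \<Sum>i<N. (cmod (\<psi> p i m))^2) UNIV"
  proof (rule infsum_dominated[where h=h])
    show "(\<lambda>j. \<Sum>i<N. (cmod (\<Phi> (r j) p i m))^2) \<longlonglongrightarrow> (\<Sum>i<N. (cmod (\<psi> p i m))^2)" for p
      by (intro tendsto_sum tendsto_power tendsto_norm psi_lim)
    show "h summable_on UNIV" unfolding h_def
      by (intro summable_on_cmult_right exp_lat_summable_shift) (use alpha in simp)
    show "norm (\<Sum>i<N. (cmod (\<Phi> (r j) p i m))^2) \<le> h p" for j p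
    proof -
      have "norm (\<Sum>i<N. (cmod (\<Phi> (r j) p i m))^2) = (\<Sum>i<N. (cmod (\<Phi> (r j) p i m))^2)"
        by (simp add: sum_nonneg)
      also have "\<dots> \<le> (\<Sum>i<N. C^2 * exp (- (2*\<alpha>) * lat_norm (m - p)))"
        by (intro sum_mono sq_exp_bound Phi_dec)
      also have "\<dots> = h p" by (simp add: h_def lat_norm_commute)
      finally show ?thesis .
    qed
  qed
  have eqc: "(\<lambda>j. infsum (\<lambda>p. \<Sum>i<N. (cmod (\<Phi> (r j) p i m))^2) UNIV) = (\<lambda>j. 1)"
    by (simp add: G_eq[symmetric] parseval_j)
  from lim have "(\<lambda>j. (1::real)) \<longlonglongrightarrow> infsum (\<lambda>p. \<Sum>i<N. (cmod (\<psi> p i m))^2) UNIV"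
    unfolding eqc .
  from LIMSEQ_unique[OF this tendsto_const] have G1: "infsum (\<lambda>p. \<Sum>i<N. (cmod (\<psi> p i m))^2) UNIV = 1" .
  have IIS: "II = Sigma UNIV (\<lambda>p. {..<Np p})" by (auto simp: II_def)
  have ss: "(\<lambda>a. (cmod (\<psi>' a m))^2) summable_on Sigma UNIV (\<lambda>p. {..<Np p})"
    using F.sq_summable[of m] by (simp add: IIS)
  have "infsum (\<lambda>a. (cmod (\<psi>' a m))^2) II = infsum (\<lambda>p. infsum (\<lambda>i. (cmod (\<psi>' (p, i) m))^2) {..<Np p}) UNIV"
    unfolding IIS by (rule infsum_Sigma_banach[OF ss, symmetric])
  also have "\<dots> = infsum (\<lambda>p. \<Sum>i<N. (cmod (\<psi> p i m))^2) UNIV"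
  proof (rule infsum_cong)
    fix p
    have "infsum (\<lambda>i. (cmod (\<psi>' (p, i) m))^2) {..<Np p} = (\<Sum>i<Np p. (cmod (\<psi> p i m))^2)"
      by (simp add: \<psi>'_def)
    also have "\<dots> = (\<Sum>i<N. (cmod (\<psi> p i m))^2)"
      by (rule sum.mono_neutral_left) (use Np_le[of p] psi_zero in auto)
    finally show "infsum (\<lambda>i. (cmod (\<psi>' (p, i) m))^2) {..<Np p} = (\<Sum>i<N. (cmod (\<psi> p i m))^2)" .
  qed
  also have "\<dots> = 1" by (rule G1)
  finally show ?thesis .
qed

lemma complete_psi:
  assumes "is_l2 u" "\<forall>a\<in>II. l2_inner (\<psi>' a) u = 0"
  shows "u = (\<lambda>_. 0)"
  by (rule F.complete_of_parseval[OF parseval_psi assms])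

lemma eigen_psi:
  assumes a: "a \<in> II"
  shows "\<exists>Ea. hop V (\<psi>' a) = (\<lambda>n. Ea * \<psi>' a n)"
proof -
  obtain p i where a': "a = (p, i)" by (cases a)
  have ip: "i < Np p" using a a' by (simp add: II_def)
  have "\<exists>n0. \<psi> p i n0 \<noteq> 0"
  proof (rule ccontr)
    assume "\<not> (\<exists>n0. \<psi> p i n0 \<noteq> 0)"
    then have "\<psi>' a = (\<lambda>_. 0)" by (auto simp: \<psi>'_def a')
    then have "l2_inner (\<psi>' a) (\<psi>' a) = 0" by (simp add: l2_inner_def)
    with ON_psi[OF a a] show False by simp
  qed
  then obtain n0 where nz: "\<psi> p i n0 \<noteq> 0" by blast
  have limVr: "(\<lambda>j. Vs (r j) n) \<longlonglongrightarrow> V n" for n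
    using LIMSEQ_subseq_LIMSEQ[OF limV r(1)] by (simp add: o_def)
  have "\<exists>E'. hop V (\<psi> p i) = (\<lambda>n. E' * \<psi> p i n)"
  proof (rule eigen_limit[where Vs="\<lambda>j. Vs (r j)" and u="\<lambda>j. \<Phi> (r j) p i" and e="\<lambda>j. E (r j) (idx (r j) p i)" and M="M p"])
    show "(\<lambda>j. hop (Vs (r j)) (\<Phi> (r j) p i) n) \<longlonglongrightarrow> hop V (\<psi> p i) n" for n
      by (rule hop_tendsto[OF limVr psi_lim])
    show "(\<lambda>j. \<Phi> (r j) p i n) \<longlonglongrightarrow> \<psi> p i n" for n by (rule psi_lim)
    show "hop (Vs (r j)) (\<Phi> (r j) p i) = (\<lambda>n. E (r j) (idx (r j) p i) * \<Phi> (r j) p i n)" if "j \<ge> M p" for j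
      using Phi_valid[OF ip that] eig by simp
    show "\<psi> p i n0 \<noteq> 0" by (rule nz)
  qed
  then show ?thesis by (simp add: \<psi>'_def[abs_def] a')
qed

lemma infinite_II: "infinite II"
proof
  assume fII: "finite II"
  have "inj (\<lambda>k::nat. (\<lambda>_::'g. int k))"
    by (rule injI) (metis of_nat_eq_iff)
  then have "infinite (range (\<lambda>k::nat. (\<lambda>_::'g. int k)))"
    using finite_imageD infinite_UNIV_nat by blast
  then have Linf: "infinite (UNIV :: ('g \<Rightarrow> int) set)" by (rule infinite_super[OF subset_UNIV])
  obtain B :: "('g \<Rightarrow> int) set" where B: "finite B" "card B = card II + 1"
    using infinite_arbitrarily_large[OF Linf] by blast
  have one: "(\<Sum>a\<in>II. (cmod (\<psi>' a m))^2) = 1" for m using parseval_psi[of m] fII by simp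
  have le1: "(\<Sum>m\<in>B. (cmod (\<psi>' a m))^2) \<le> 1" if a: "a \<in> II" for a
  proof -
    have ls: "(\<lambda>n. (cmod (\<psi>' a n))^2) summable_on UNIV" using F.psi_l2[OF a] by (simp add: is_l2_def)
    have "complex_of_real (infsum (\<lambda>n. (cmod (\<psi>' a n))^2) UNIV) = 1"
      using l2_norm_inner[OF F.psi_l2[OF a]] ON_psi[OF a a] by simp
    then have "infsum (\<lambda>n. (cmod (\<psi>' a n))^2) UNIV = 1" by simp
    moreover have "(\<Sum>m\<in>B. (cmod (\<psi>' a m))^2) \<le> infsum (\<lambda>n. (cmod (\<psi>' a n))^2) UNIV"
      by (rule finite_sum_le_infsum[OF ls B(1)]) auto
    ultimately show ?thesis by simp
  qed
  have "real (card B) = (\<Sum>m\<in>B. 1)" by simp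
  also have "\<dots> = (\<Sum>m\<in>B. \<Sum>a\<in>II. (cmod (\<psi>' a m))^2)" by (simp add: one)
  also have "\<dots> = (\<Sum>a\<in>II. \<Sum>m\<in>B. (cmod (\<psi>' a m))^2)" by (rule sum.swap)
  also have "\<dots> \<le> (\<Sum>a\<in>II. 1)" by (rule sum_mono) (rule le1)
  also have "\<dots> = real (card II)" by simp
  finally show False using B(2) by simp
qed

lemma ULE_psi: "ULE_const \<alpha> C (hop V)"
proof -
  have "countable II" by (rule countableI_type)
  then obtain e where e: "bij_betw e (UNIV :: nat set) II"
    using infinite_II countable_infiniteE' by blast
  have "\<forall>a\<in>II. \<exists>Ea. hop V (\<psi>' a) = (\<lambda>n. Ea * \<psi>' a n)" using eigen_psi by blast
  then obtain Ef where Ef: "\<And>a. a \<in> II \<Longrightarrow> hop V (\<psi>' a) = (\<lambda>n. Ef a * \<psi>' a n)"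
    by (metis bchoice)
  have eI: "e k \<in> II" for k using e by (auto simp: bij_betw_def)
  have einj: "e k = e k' \<longleftrightarrow> k = k'" for k k'
    using e by (auto simp: bij_betw_def inj_on_def)
  have esurj: "a \<in> II \<Longrightarrow> \<exists>k. a = e k" for a
    using e by (auto simp: bij_betw_def)
  show ?thesis
    unfolding ULE_const_def
  proof (intro exI conjI allI impI)
    show "is_l2 (\<psi>' (e k))" for k by (rule F.psi_l2[OF eI])
    show "l2_inner (\<psi>' (e k)) (\<psi>' (e k')) = (if k = k' then 1 else 0)" for k k'
      using ON_psi[OF eI eI] einj by simp
    show "u = (\<lambda>_. 0)" if "is_l2 u \<and> (\<forall>k. l2_inner (\<psi>' (e k)) u = 0)" for u
      by (rule complete_psi) (use that esurj in blast)+
    show "hop V (\<psi>' (e k)) = (\<lambda>n. Ef (e k) * \<psi>' (e k) n)" for k by (rule Ef[OF eI])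
    show "cmod (\<psi>' (e k) m) \<le> C * exp (- \<alpha> * lat_norm (m - fst (e k)))" for k m
      unfolding \<psi>'_def by (rule psi_dec)
  qed
qed

end

lemma ULE_limit:
  fixes Vs :: "nat \<Rightarrow> ('g::finite \<Rightarrow> int) \<Rightarrow> real" and V
  assumes alpha: "\<alpha> > 0" and Cpos: "C > 0"
    and limV: "\<And>n. (\<lambda>j. Vs j n) \<longlonglongrightarrow> V n"
    and ule: "\<And>j. ULE_const \<alpha> C (hop (Vs j))"
  shows "ULE_const \<alpha> C (hop V)"
proof -
  define Q where "Q j \<phi> E c \<longleftrightarrow> (\<forall>k. is_l2 (\<phi> k)) \<and>
       (\<forall>k j. l2_inner (\<phi> k) (\<phi> j) = (if k = j then 1 else 0)) \<and>
       (\<forall>u. is_l2 u \<and> (\<forall>k. l2_inner (\<phi> k) u = 0) \<longrightarrow> u = (\<lambda>_. 0)) \<and>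
       (\<forall>k. hop (Vs j) (\<phi> k) = (\<lambda>n. E k * \<phi> k n)) \<and>
       (\<forall>k m. cmod (\<phi> k m) \<le> C * exp (- \<alpha> * lat_norm (m - c k)))"
    for j and \<phi> :: "nat \<Rightarrow> ('g \<Rightarrow> int) \<Rightarrow> complex" and E :: "nat \<Rightarrow> complex" and c :: "nat \<Rightarrow> 'g \<Rightarrow> int"
  have "\<forall>j. \<exists>\<phi> E c. Q j \<phi> E c" using ule unfolding ULE_const_def Q_def by blast
  then obtain \<phi> where "\<forall>j. \<exists>E c. Q j (\<phi> j) E c" by (rule choice[THEN exE]) blast
  then obtain E where "\<forall>j. \<exists>c. Q j (\<phi> j) (E j) c" by (rule choice[THEN exE]) blast
  then obtain cc where Q: "\<forall>j. Q j (\<phi> j) (E j) (cc j)" by (rule choice[THEN exE]) blast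
  obtain N where N: "\<forall>(I::nat set) (\<psi>::nat \<Rightarrow> ('g \<Rightarrow> int) \<Rightarrow> complex) c.
     (\<forall>a\<in>I. \<forall>n. cmod (\<psi> a n) \<le> C * exp (- \<alpha> * lat_norm (n - c a))) \<and>
     (\<forall>a\<in>I. \<forall>b\<in>I. l2_inner (\<psi> a) (\<psi> b) = (if a = b then 1 else 0)) \<longrightarrow>
     (\<forall>p. finite {a\<in>I. c a = p} \<and> card {a\<in>I. c a = p} \<le> N)"
    using mult_bound[OF alpha, of C] Cpos by auto
  interpret L: limdata Vs V \<alpha> C \<phi> E cc N
  proof
    show "\<alpha> > 0" "C > 0" by (rule alpha, rule Cpos)
    show "(\<lambda>j. Vs j n) \<longlonglongrightarrow> V n" for n by (rule limV)
    show "is_l2 (\<phi> j k)" for j k using Q by (simp add: Q_def)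
    show "l2_inner (\<phi> j k) (\<phi> j k') = (if k = k' then 1 else 0)" for j k k' using Q by (simp add: Q_def)
    show "is_l2 u \<Longrightarrow> \<forall>k. l2_inner (\<phi> j k) u = 0 \<Longrightarrow> u = (\<lambda>_. 0)" for j u using Q by (simp add: Q_def)
    show "hop (Vs j) (\<phi> j k) = (\<lambda>n. E j k * \<phi> j k n)" for j k using Q by (simp add: Q_def)
    show "cmod (\<phi> j k m) \<le> C * exp (- \<alpha> * lat_norm (m - cc j k))" for j k m using Q by (simp add: Q_def)
    show "finite {k. cc j k = p} \<and> card {k. cc j k = p} \<le> N" for j p
    proof -
      have pre: "(\<forall>a\<in>UNIV. \<forall>n. cmod (\<phi> j a n) \<le> C * exp (- \<alpha> * lat_norm (n - cc j a))) \<and>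
        (\<forall>a\<in>UNIV. \<forall>b\<in>UNIV. l2_inner (\<phi> j a) (\<phi> j b) = (if a = b then 1 else 0))"
        using Q by (simp add: Q_def)
      have "\<forall>p. finite {a\<in>UNIV. cc j a = p} \<and> card {a\<in>UNIV. cc j a = p} \<le> N"
        by (rule N[THEN spec[of _ UNIV], THEN spec[of _ "\<phi> j"], THEN spec[of _ "cc j"], THEN mp, OF pre])
      then show ?thesis by simp
    qed
  qed
  show ?thesis by (rule L.ULE_psi)
qed

lemma zpow_0[simp]: "zpow h 0 x = x" by (simp add: zpow_def)
lemma zpow_1: "zpow h 1 = h" by (simp add: zpow_def)

lemma zpow_succ:
  assumes b: "bij h"
  shows "zpow h (k + 1) x = h (zpow h k x)"
proof (cases "k \<ge> 0")
  case True
  then have "nat (k + 1) = Suc (nat k)" by simp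
  with True show ?thesis by (simp add: zpow_def)
next
  case False
  then have nk: "nat (- k) = Suc (nat (- (k + 1)))" by simp
  have hi: "h (inv h y) = y" for y using b by (simp add: bij_is_surj surj_f_inv_f)
  have "zpow h k x = inv h ((inv h ^^ nat (- (k + 1))) x)"
    using False by (simp add: zpow_def nk)
  then have "h (zpow h k x) = (inv h ^^ nat (- (k + 1))) x" by (simp add: hi)
  also have "\<dots> = zpow h (k + 1) x"
    using False by (cases "k + 1 = 0") (auto simp: zpow_def)
  finally show ?thesis by simp
qed

lemma zpow_pred:
  assumes b: "bij h"
  shows "zpow h (k - 1) x = inv h (zpow h k x)"
proof -
  have "zpow h k x = h (zpow h (k - 1) x)" using zpow_succ[OF b, of "k - 1" x] by simp
  then show ?thesis using b by (simp add: bij_is_inj)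
qed

lemma zpow_add:
  assumes b: "bij h"
  shows "zpow h a (zpow h c x) = zpow h (a + c) x"
proof (induction a rule: int_induct[where k=0])
  case base then show ?case by simp
next
  case (step1 i)
  then have IH: "zpow h i (zpow h c x) = zpow h (i + c) x" by blast
  have e: "i + 1 + c = (i + c) + 1" by simp
  show ?case unfolding e zpow_succ[OF b] IH ..
next
  case (step2 i)
  then have IH: "zpow h i (zpow h c x) = zpow h (i + c) x" by blast
  have e: "i - 1 + c = (i + c) - 1" by simp
  show ?case unfolding e zpow_pred[OF b] IH ..
qed

lemma comm_inv:
  assumes b: "bij h" and c: "\<And>y. h (q y) = q (h y)"
  shows "inv h (q y) = q (inv h y)"
proof -
  have hi: "h (inv h y) = y" for y using b by (simp add: bij_is_surj surj_f_inv_f)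
  have ih: "inv h (h y) = y" for y using b by (simp add: bij_is_inj)
  have "h (q (inv h y)) = q y" by (simp add: c hi)
  then have "inv h (h (q (inv h y))) = inv h (q y)" by simp
  then show ?thesis by (simp add: ih)
qed

lemma zpow_comm:
  assumes b: "bij h" and c: "\<And>y. h (q y) = q (h y)"
  shows "zpow h a (q x) = q (zpow h a x)"
proof (induction a arbitrary: x rule: int_induct[where k=0])
  case base then show ?case by simp
next
  case (step1 i)
  then have IH: "\<And>x. zpow h i (q x) = q (zpow h i x)" by blast
  show ?case by (simp add: zpow_succ[OF b] IH c)
next
  case (step2 i)
  then have IH: "\<And>x. zpow h i (q x) = q (zpow h i x)" by blast
  show ?case by (simp add: zpow_pred[OF b] IH comm_inv[of h q, OF b c])
qed

lemma zpow_comm2: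
  assumes bh: "bij h" and bg: "bij g" and c: "\<And>y. h (g y) = g (h y)"
  shows "zpow h a (zpow g d x) = zpow g d (zpow h a x)"
proof -
  have "zpow g d (h y) = h (zpow g d y)" for y by (rule zpow_comm[OF bg]) (simp add: c)
  then show ?thesis by (intro zpow_comm[OF bh]) simp
qed

definition PP :: "'i list \<Rightarrow> ('i \<Rightarrow> 'a \<Rightarrow> 'a) \<Rightarrow> 'a \<Rightarrow> 'a" where
  "PP xs F = foldr (\<lambda>i g. F i \<circ> g) xs id"

lemma PP_simps[simp]: "PP [] F x = x" "PP (y # xs) F x = F y (PP xs F x)"
  by (simp_all add: PP_def)

lemma PP_comm: "(\<And>i y. F i (q y) = q (F i y)) \<Longrightarrow> PP xs F (q x) = q (PP xs F x)"
  by (induction xs) simp_all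

lemma PP_mult:
  assumes c: "\<And>i j y. F i (G j y) = G j (F i y)"
  shows "PP xs F (PP xs G x) = PP xs (\<lambda>i y. F i (G i y)) x"
proof (induction xs)
  case Nil then show ?case by simp
next
  case (Cons y xs)
  have cc: "PP xs F (G y z) = G y (PP xs F z)" for z by (rule PP_comm) (rule c)
  show ?case using Cons by (simp add: cc)
qed

lemma PP_id: "PP xs (\<lambda>_ y. y) x = x" by (induction xs) simp_all

lemma PP_single: "distinct xs \<Longrightarrow> PP xs (\<lambda>j y. if j = i then h y else y) x = (if i \<in> set xs then h x else x)"
  by (induction xs) (auto simp: PP_id)

definition gl :: "'g::finite list" where "gl = (SOME xs. distinct xs \<and> set xs = UNIV)"

lemma gl: "distinct (gl::'g::finite list)" "set (gl::'g list) = UNIV"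
proof -
  have fU: "finite (UNIV::'g set)" by simp
  have "\<exists>xs::'g list. distinct xs \<and> set xs = UNIV" using finite_distinct_list[OF fU] by auto
  from someI_ex[OF this] show "distinct (gl::'g list)" "set (gl::'g list) = UNIV" unfolding gl_def by blast+
qed

lemma tpow_PP: "tpow T n x = PP gl (\<lambda>i. zpow (T i) (n i)) x"
  by (simp add: tpow_def PP_def gl_def)

locale tact =
  fixes T :: "'g::finite \<Rightarrow> 'a \<Rightarrow> 'a"
  assumes bijT: "\<And>i. bij (T i)" and commT: "\<And>i j y. T i (T j y) = T j (T i y)"
begin

lemma tpow_add': "tpow T n (tpow T m x) = tpow T (n + m) x"
proof -
  have c: "zpow (T i) (n i) (zpow (T j) (m j) y) = zpow (T j) (m j) (zpow (T i) (n i) y)" for i j y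
  proof (rule zpow_comm2)
    show "bij (T i)" "bij (T j)" by (rule bijT)+
    show "T i (T j z) = T j (T i z)" for z by (rule commT)
  qed
  have "PP gl (\<lambda>i. zpow (T i) (n i)) (PP gl (\<lambda>i. zpow (T i) (m i)) x) = PP gl (\<lambda>i y. zpow (T i) (n i) (zpow (T i) (m i) y)) x"
    by (rule PP_mult[where F="\<lambda>i. zpow (T i) (n i)" and G="\<lambda>i. zpow (T i) (m i)", OF c])
  then have "tpow T n (tpow T m x) = PP gl (\<lambda>i y. zpow (T i) (n i) (zpow (T i) (m i) y)) x"
    by (simp only: tpow_PP)
  also have "\<dots> = tpow T (n + m) x"
    unfolding tpow_PP by (simp add: zpow_add[OF bijT])
  finally show ?thesis .
qed

lemma tpow_zero: "tpow T 0 x = x"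
proof -
  have "(\<lambda>i. zpow (T i) ((0::'g \<Rightarrow> int) i)) = (\<lambda>i y. y)" by (simp add: fun_eq_iff zero_fun_def)
  then show ?thesis unfolding tpow_PP by (simp add: PP_id)
qed

definition eu :: "'g \<Rightarrow> 'g \<Rightarrow> int" where "eu i = (\<lambda>j. if j = i then 1 else 0)"

lemma tpow_unit: "tpow T (eu i) x = T i x"
proof -
  have "(\<lambda>j. zpow (T j) (eu i j)) = (\<lambda>j y. if j = i then T i y else y)"
    by (auto simp: eu_def zpow_1 fun_eq_iff)
  then show ?thesis unfolding tpow_PP by (simp add: PP_single gl)
qed

end

lemma ULE_shift:
  fixes V :: "('g::finite \<Rightarrow> int) \<Rightarrow> real"
  assumes u: "ULE_const \<alpha> C (hop V)"
  shows "ULE_const \<alpha> C (hop (\<lambda>m. V (m + n)))"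
proof -
  from u obtain \<phi> :: "nat \<Rightarrow> ('g \<Rightarrow> int) \<Rightarrow> complex" and E :: "nat \<Rightarrow> complex" and c :: "nat \<Rightarrow> 'g \<Rightarrow> int" where
    l2: "\<forall>k. is_l2 (\<phi> k)" and
    ON: "\<forall>k j. l2_inner (\<phi> k) (\<phi> j) = (if k = j then 1 else 0)" and
    cp: "\<forall>u. is_l2 u \<and> (\<forall>k. l2_inner (\<phi> k) u = 0) \<longrightarrow> u = (\<lambda>_. 0)" and
    eig: "\<forall>k. hop V (\<phi> k) = (\<lambda>x. E k * \<phi> k x)" and
    dec: "\<forall>k m. cmod (\<phi> k m) \<le> C * exp (- \<alpha> * lat_norm (m - c k))"
    unfolding ULE_const_def by (elim exE conjE) blast
  define \<phi>' where "\<phi>' k m = \<phi> k (m + n)" for k m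
  have l2': "is_l2 (\<phi>' k)" for k
    using l2 shift_summable_iff'[of "\<lambda>m. (cmod (\<phi> k m))^2" n] by (simp add: is_l2_def \<phi>'_def)
  have inner': "l2_inner (\<phi>' k) w = l2_inner (\<phi> k) (\<lambda>m. w (m - n))" for k w
    unfolding l2_inner_def \<phi>'_def using shift_infsum'[of "\<lambda>m. cnj (\<phi> k m) * w (m - n)" n] by simp
  show ?thesis
    unfolding ULE_const_def
  proof (intro exI[of _ \<phi>'] exI[of _ E] exI[of _ "\<lambda>k. c k - n"] conjI allI impI)
    show "is_l2 (\<phi>' k)" for k by (rule l2')
    show "l2_inner (\<phi>' k) (\<phi>' j) = (if k = j then 1 else 0)" for k j
      using ON by (simp add: inner' \<phi>'_def)
    show "w = (\<lambda>_. 0)" if w: "is_l2 w \<and> (\<forall>k. l2_inner (\<phi>' k) w = 0)" for w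
    proof -
      have "is_l2 (\<lambda>m. w (m - n))"
        using w shift_summable_iff[of "\<lambda>m. (cmod (w m))^2" n] by (simp add: is_l2_def)
      moreover have "\<forall>k. l2_inner (\<phi> k) (\<lambda>m. w (m - n)) = 0" using w by (simp add: inner')
      ultimately have "(\<lambda>m. w (m - n)) = (\<lambda>_. 0)" using cp by blast
      then have h0: "\<forall>x. w (x - n) = 0" by (simp add: fun_eq_iff)
      have "w m = 0" for m using h0[rule_format, of "m + n"] by simp
      then show ?thesis by (simp add: fun_eq_iff)
    qed
    show "hop (\<lambda>m. V (m + n)) (\<phi>' k) = (\<lambda>x. E k * \<phi>' k x)" for k
    proof
      fix x
      have bij: "bij_betw (\<lambda>m. m + n) {m. lat_norm (m - x) = 1} {m. lat_norm (m - (x + n)) = 1}"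
        by (rule bij_betwI[where g="\<lambda>m. m - n"]) (auto simp: algebra_simps)
      have "(\<Sum>m\<in>{m. lat_norm (m - x) = 1}. \<phi> k (m + n)) = (\<Sum>m\<in>{m. lat_norm (m - (x + n)) = 1}. \<phi> k m)"
        by (rule sum.reindex_bij_betw[OF bij])
      then have "hop (\<lambda>m. V (m + n)) (\<phi>' k) x = hop V (\<phi> k) (x + n)"
        by (simp add: hop_def \<phi>'_def)
      also have "\<dots> = E k * \<phi>' k x" using eig by (simp add: \<phi>'_def)
      finally show "hop (\<lambda>m. V (m + n)) (\<phi>' k) x = E k * \<phi>' k x" .
    qed
    show "cmod (\<phi>' k m) \<le> C * exp (- \<alpha> * lat_norm (m - (c k - n)))" for k m
    proof -
      have e: "m - (c k - n) = (m + n) - c k" by (simp add: algebra_simps)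
      show ?thesis unfolding e \<phi>'_def using dec by blast
    qed
  qed
qed

lemma ULE_mono:
  assumes u: "ULE_const \<alpha> C H" and a: "0 \<le> \<alpha>'" "\<alpha>' \<le> \<alpha>" and c: "C \<le> C'"
  shows "ULE_const \<alpha>' C' H"
proof -
  have b: "C * exp (- \<alpha> * lat_norm x) \<le> C' * exp (- \<alpha>' * lat_norm x)" if C0: "0 \<le> C" for x
  proof -
    have "\<alpha>' * lat_norm x \<le> \<alpha> * lat_norm x" using a lat_norm_nonneg[of x] by (intro mult_right_mono) auto
    then have "exp (- \<alpha> * lat_norm x) \<le> exp (- \<alpha>' * lat_norm x)" by simp
    then show ?thesis using c C0 by (intro mult_mono) auto
  qed
  from u show ?thesis unfolding ULE_const_def
  proof (elim exE conjE, intro exI conjI)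
    fix \<phi> :: "nat \<Rightarrow> _" and E c
    assume d: "\<forall>k m. cmod (\<phi> k m) \<le> C * exp (- \<alpha> * lat_norm (m - c k))"
    have C0: "0 \<le> C" using d[rule_format, of 0 0] by (smt (verit) norm_ge_zero exp_gt_zero mult_neg_pos)
    show "\<forall>k m. cmod (\<phi> k m) \<le> C' * exp (- \<alpha>' * lat_norm (m - c k))"
      using d b[OF C0] order_trans by blast
  qed
qed

lemma funpow_cont:
  fixes h :: "'a::topological_space \<Rightarrow> 'a"
  shows "continuous_on UNIV h \<Longrightarrow> continuous_on UNIV (h ^^ n)"
proof (induction n)
  case 0
  have "h ^^ 0 = (\<lambda>x. x)" by (simp add: fun_eq_iff)
  then show ?case by (simp only: continuous_on_id)
next
  case (Suc n)
  have "continuous_on UNIV (\<lambda>x. h ((h ^^ n) x))"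
    by (rule continuous_on_compose2[OF Suc.prems Suc.IH[OF Suc.prems]]) auto
  then show ?case by (simp add: o_def)
qed

lemma PP_cont: "(\<And>i. continuous_on UNIV (F i)) \<Longrightarrow> continuous_on UNIV (PP xs F)"
proof (induction xs)
  case Nil
  have "PP [] F = id" by (simp add: fun_eq_iff)
  then show ?case by (simp add: continuous_on_id)
next
  case (Cons y xs)
  have "continuous_on UNIV (\<lambda>x. F y (PP xs F x))"
    by (rule continuous_on_compose2[OF Cons.prems Cons.IH[OF Cons.prems]]) auto
  moreover have "PP (y # xs) F = (\<lambda>x. F y (PP xs F x))" by (simp add: fun_eq_iff)
  ultimately show ?case by simp
qed

theorem theorem3p1:
  fixes \<mu> :: "('a::metric_space) measure"
    and T :: "'g::finite \<Rightarrow> 'a \<Rightarrow> 'a"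
    and f :: "'a \<Rightarrow> real"
  assumes borel: "sets \<mu> = sets borel"
    and homeo: "\<forall>i. \<exists>g. homeomorphism UNIV UNIV (T i) g"
    and commute: "\<forall>i j. T i \<circ> T j = T j \<circ> T i"
    and ergodic: "ergodic_action \<mu> T"
    and bdd: "bounded (range f)"
    and filt: "inv_cont_filter \<mu> T f"
    and ule: "\<exists>S\<in>sets \<mu>. emeasure \<mu> S > 0 \<and> (\<forall>\<omega>\<in>S. has_ULE (schr_op T f \<omega>))"
  shows "\<exists>\<alpha>>0. \<exists>C>0. \<forall>\<omega>\<in>msupp \<mu>. ULE_const \<alpha> C (schr_op T f \<omega>)"
proof -
  from homeo obtain g where hg: "\<And>i. homeomorphism UNIV UNIV (T i) (g i)" by metis
  have gT: "g i (T i x) = x" for i x using hg[of i] by (simp add: homeomorphism_def)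
  have Tg: "T i (g i x) = x" for i x using hg[of i] by (simp add: homeomorphism_def)
  have cT: "continuous_on UNIV (T i)" for i using hg[of i] by (simp add: homeomorphism_def)
  have cg: "continuous_on UNIV (g i)" for i using hg[of i] by (simp add: homeomorphism_def)
  have bijT: "bij (T i)" for i by (rule o_bij[where g="g i"]) (auto simp: fun_eq_iff gT Tg)
  have invT: "inv (T i) = g i" for i by (rule inv_unique_comp) (auto simp: fun_eq_iff gT Tg)
  have commT: "T i (T j y) = T j (T i y)" for i j y using commute by (metis comp_apply)
  interpret TA: tact T by standard (rule bijT, rule commT)
  have czpow: "continuous_on UNIV (zpow (T i) k)" for i k
    by (cases "0 \<le> k") (simp_all add: zpow_def invT funpow_cont cT cg)
  have ctpow: "continuous_on UNIV (tpow T n)" for n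
  proof -
    have "tpow T n = PP gl (\<lambda>i. zpow (T i) (n i))" by (simp add: fun_eq_iff tpow_PP)
    then show ?thesis by (simp add: PP_cont czpow)
  qed
  have tpow_tendsto: "(\<lambda>j. tpow T n (x j)) \<longlonglongrightarrow> tpow T n y" if "x \<longlonglongrightarrow> y" for x y n
  proof -
    have "isCont (tpow T n) y" using ctpow[of n] by (simp add: continuous_on_eq_continuous_at)
    then show ?thesis by (rule isCont_tendsto_compose[OF _ that])
  qed
  have fcont: "(\<lambda>k. f (s k)) \<longlonglongrightarrow> f \<omega>" if "s \<longlonglongrightarrow> \<omega>" for s \<omega>
  proof -
    from filt obtain F :: "'a \<Rightarrow> 'a filter" where F: "\<forall>\<omega> A. eventually (\<lambda>x. x \<in> A) (F \<omega>) \<longrightarrow>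
        (\<forall>\<delta>>0. outer_measure_of \<mu> (A \<inter> ball \<omega> \<delta>) > 0) \<and>
        (\<forall>s. (\<forall>k. s k \<in> A) \<and> s \<longlonglongrightarrow> \<omega> \<longrightarrow> (\<lambda>k. f (s k)) \<longlonglongrightarrow> f \<omega>) \<and>
        (\<forall>n. eventually (\<lambda>x. x \<in> tpow T n ` A) (F (tpow T n \<omega>)))"
      unfolding inv_cont_filter_def by blast
    have "eventually (\<lambda>x. x \<in> UNIV) (F \<omega>)" by simp
    with F have "\<forall>s. (\<forall>k. s k \<in> UNIV) \<and> s \<longlonglongrightarrow> \<omega> \<longrightarrow> (\<lambda>k. f (s k)) \<longlonglongrightarrow> f \<omega>" by blast
    with that show ?thesis by blast
  qed
  have space: "space \<mu> = UNIV" using sets_eq_imp_space_eq[OF borel] by simp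
  have erg: "\<And>A. A \<in> sets \<mu> \<Longrightarrow> (\<forall>i. T i -` A \<inter> space \<mu> = A) \<Longrightarrow> emeasure \<mu> A = 0 \<or> emeasure \<mu> (space \<mu> - A) = 0"
    using ergodic unfolding ergodic_action_def by blast
  from ule obtain S where S: "S \<in> sets \<mu>" "emeasure \<mu> S > 0" "\<And>\<omega>. \<omega> \<in> S \<Longrightarrow> has_ULE (schr_op T f \<omega>)" by blast
  define al where "al k = 1 / (real k + 1)" for k :: nat
  define Ck where "Ck k = real k + 1" for k :: nat
  have al0: "al k > 0" for k by (simp add: al_def)
  have Ck0: "Ck k > 0" for k by (simp add: Ck_def)
  define Sk where "Sk k = {\<omega>\<in>S. ULE_const (al k) (Ck k) (schr_op T f \<omega>)}" for k
  define D where "D k = {tpow T n s | n s. s \<in> Sk k}" for k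
  have S_cover: "S \<subseteq> (\<Union>k. Sk k)"
  proof
    fix \<omega> assume w: "\<omega> \<in> S"
    then obtain a C where aC: "a > 0" "C > 0" "ULE_const a C (schr_op T f \<omega>)"
      using S(3) unfolding has_ULE_def by blast
    define k where "k = nat \<lceil>max (1/a) C\<rceil>"
    have k1: "1 / a \<le> real k" and k2: "C \<le> real k" unfolding k_def by linarith+
    have "al k \<le> a"
    proof -
      have "1 / a < real k + 1" using k1 by simp
      then have "1 < a * (real k + 1)" using aC(1) by (simp add: field_simps)
      then show ?thesis using aC(1) by (simp add: al_def field_simps)
    qed
    moreover have "C \<le> Ck k" using k2 by (simp add: Ck_def)
    ultimately have "ULE_const (al k) (Ck k) (schr_op T f \<omega>)"
      using ULE_mono[OF aC(3)] al0[of k] by auto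
    with w show "\<omega> \<in> (\<Union>k. Sk k)" by (auto simp: Sk_def)
  qed
  have D_ULE: "ULE_const (al k) (Ck k) (schr_op T f \<omega>)" if wD: "\<omega> \<in> D k" for k \<omega>
  proof -
    obtain n s where ns: "\<omega> = tpow T n s" "s \<in> Sk k" using wD unfolding D_def by blast
    have "ULE_const (al k) (Ck k) (hop (\<lambda>m. f (tpow T m s)))" using ns(2) by (simp add: Sk_def schr_hop)
    then have "ULE_const (al k) (Ck k) (hop (\<lambda>m. f (tpow T (m + n) s)))"
      by (rule ULE_shift[where V="\<lambda>m. f (tpow T m s)"])
    moreover have "schr_op T f \<omega> = hop (\<lambda>m. f (tpow T (m + n) s))"
      by (simp add: schr_hop ns(1) TA.tpow_add')
    ultimately show ?thesis by simp
  qed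
  have D_closed: "tpow T m x \<in> D k" if xD: "x \<in> D k" for x m k
  proof -
    obtain n s where ns: "x = tpow T n s" "s \<in> Sk k" using xD unfolding D_def by blast
    then have "tpow T m x = tpow T (m + n) s" by (simp add: TA.tpow_add')
    with ns(2) show ?thesis by (auto simp: D_def)
  qed
  have S_D: "Sk k \<subseteq> D k" for k
  proof
    fix s assume "s \<in> Sk k"
    moreover have "s = tpow T 0 s" by (simp add: TA.tpow_zero)
    ultimately show "s \<in> D k" unfolding D_def by blast
  qed
  have dense: "\<exists>k. \<forall>\<omega>\<in>msupp \<mu>. \<forall>\<delta>>0. \<exists>x\<in>D k. dist x \<omega> < \<delta>"
  proof (rule ccontr)
    assume "\<not> ?thesis"
    then have "\<forall>k. \<exists>w \<delta>. w \<in> msupp \<mu> \<and> \<delta> > 0 \<and> (\<forall>x\<in>D k. \<not> dist x w < \<delta>)" by blast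
    then obtain w \<delta> where wd: "\<And>k. w k \<in> msupp \<mu>" "\<And>k. \<delta> k > 0" "\<And>k x. x \<in> D k \<Longrightarrow> \<not> dist x (w k) < \<delta> k"
      by metis
    define U where "U k = (\<Union>n. tpow T n -` ball (w k) (\<delta> k))" for k
    have Uo: "open (U k)" for k
    proof -
      have "open (tpow T n -` ball (w k) (\<delta> k))" for n
        using ctpow[of n] continuous_on_open_vimage[OF open_UNIV, of "tpow T n"] by auto
      then show ?thesis unfolding U_def by blast
    qed
    have Us: "U k \<in> sets \<mu>" for k using borel_open[OF Uo] borel by simp
    have Uinv: "T i -` U k \<inter> space \<mu> = U k" for i k
    proof -
      have "x \<in> U k \<longleftrightarrow> T i x \<in> U k" for x
      proof
        assume "x \<in> U k"
        then obtain n where n: "tpow T n x \<in> ball (w k) (\<delta> k)" by (auto simp: U_def)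
        have "tpow T (n - TA.eu i) (T i x) = tpow T n x"
          using TA.tpow_add'[of "n - TA.eu i" "TA.eu i" x] by (simp add: TA.tpow_unit)
        with n have "T i x \<in> tpow T (n - TA.eu i) -` ball (w k) (\<delta> k)" by simp
        then show "T i x \<in> U k" unfolding U_def by blast
      next
        assume "T i x \<in> U k"
        then obtain n where n: "tpow T n (T i x) \<in> ball (w k) (\<delta> k)" by (auto simp: U_def)
        have "tpow T n (T i x) = tpow T (n + TA.eu i) x"
          using TA.tpow_add'[of n "TA.eu i" x] by (simp add: TA.tpow_unit)
        with n have "x \<in> tpow T (n + TA.eu i) -` ball (w k) (\<delta> k)" by simp
        then show "x \<in> U k" unfolding U_def by blast
      qed
      then show ?thesis using space by auto
    qed
    have Upos: "emeasure \<mu> (U k) > 0" for k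
    proof -
      have "ball (w k) (\<delta> k) \<subseteq> U k" unfolding U_def using TA.tpow_zero by auto
      moreover have "emeasure \<mu> (ball (w k) (\<delta> k)) > 0" using wd(1)[of k] wd(2)[of k] by (simp add: msupp_def)
      ultimately show ?thesis using emeasure_mono[OF _ Us] by (metis order_less_le_trans)
    qed
    have Unull: "(space \<mu> - U k) \<in> null_sets \<mu>" for k
    proof -
      have "\<forall>i. T i -` U k \<inter> space \<mu> = U k" using Uinv by blast
      then have "emeasure \<mu> (U k) = 0 \<or> emeasure \<mu> (space \<mu> - U k) = 0" by (rule erg[OF Us])
      then have "emeasure \<mu> (space \<mu> - U k) = 0" using Upos[of k] by auto
      moreover have "space \<mu> - U k \<in> sets \<mu>" using Us by auto
      ultimately show ?thesis by auto
    qed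
    have DU: "D k \<subseteq> space \<mu> - U k" for k
    proof
      fix x assume x: "x \<in> D k"
      show "x \<in> space \<mu> - U k"
      proof (rule ccontr)
        assume "x \<notin> space \<mu> - U k"
        then have "x \<in> U k" using space by auto
        then obtain n where n: "tpow T n x \<in> ball (w k) (\<delta> k)" by (auto simp: U_def)
        have "tpow T n x \<in> D k" by (rule D_closed[OF x])
        then have "\<not> dist (tpow T n x) (w k) < \<delta> k" by (rule wd(3))
        with n show False by (simp add: dist_commute)
      qed
    qed
    have "S \<subseteq> (\<Union>k. space \<mu> - U k)"
    proof
      fix s assume "s \<in> S"
      then obtain k where "s \<in> Sk k" using S_cover by blast
      then have "s \<in> D k" using S_D by blast
      then have "s \<in> space \<mu> - U k" using DU by blast
      then show "s \<in> (\<Union>k. space \<mu> - U k)" by blast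
    qed
    moreover have "(\<Union>k. space \<mu> - U k) \<in> null_sets \<mu>" using Unull by blast
    ultimately have "S \<in> null_sets \<mu>" using null_sets_subset S(1) by blast
    then have "emeasure \<mu> S = 0" by (simp add: null_sets_def)
    with S(2) show False by simp
  qed
  then obtain k where k: "\<And>\<omega> \<delta>. \<omega> \<in> msupp \<mu> \<Longrightarrow> \<delta> > 0 \<Longrightarrow> \<exists>x\<in>D k. dist x \<omega> < \<delta>" by blast
  show ?thesis
  proof (rule exI[of _ "al k"], intro conjI exI[of _ "Ck k"] ballI)
    show "al k > 0" "Ck k > 0" by (rule al0, rule Ck0)
    fix \<omega> assume w: "\<omega> \<in> msupp \<mu>"
    have "\<forall>j::nat. \<exists>x\<in>D k. dist x \<omega> < 1 / (real j + 1)" using k[OF w] by simp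
    then obtain x where x: "\<And>j. x j \<in> D k" "\<And>j. dist (x j) \<omega> < 1 / (real j + 1)" by metis
    have xl: "x \<longlonglongrightarrow> \<omega>"
    proof (rule metric_LIMSEQ_I)
      fix r :: real assume r: "r > 0"
      obtain no :: nat where no: "1 / r < real no" using reals_Archimedean2 by blast
      have "dist (x j) \<omega> < r" if "j \<ge> no" for j
      proof -
        have "1 / r < real j + 1" using no that by linarith
        then have "1 / (real j + 1) < r" using r by (simp add: field_simps)
        then show ?thesis using x(2)[of j] by linarith
      qed
      then show "\<exists>no. \<forall>n\<ge>no. dist (x n) \<omega> < r" by blast
    qed
    have limV: "(\<lambda>j. f (tpow T n (x j))) \<longlonglongrightarrow> f (tpow T n \<omega>)" for n
      by (rule fcont[OF tpow_tendsto[OF xl]])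
    have "ULE_const (al k) (Ck k) (hop (\<lambda>n. f (tpow T n \<omega>)))"
    proof (rule ULE_limit[where Vs="\<lambda>j n. f (tpow T n (x j))"])
      show "al k > 0" "Ck k > 0" by (rule al0, rule Ck0)
      show "(\<lambda>j. f (tpow T n (x j))) \<longlonglongrightarrow> f (tpow T n \<omega>)" for n by (rule limV)
      show "ULE_const (al k) (Ck k) (hop (\<lambda>n. f (tpow T n (x j))))" for j
        using D_ULE[OF x(1)[of j]] by (simp add: schr_hop)
    qed
    then show "ULE_const (al k) (Ck k) (schr_op T f \<omega>)" by (simp add: schr_hop)
  qed
qed

end
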